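(* Let $(P,\omega)$ be a canonically labeled sign-graded poset with $p$ elements and rank $r$. Then the Charney–Davis quantity $CD(P)=(-1)^{(p-1-r)/2}W(P,\omega;-1)$ is equal to the number of reverse alternating permutations in $\mathcal{L}(P,\omega)$ all of whose components have an odd number of letters.
   Context: $\omega:P\to\{1,\dots,p\}$ is a bijection; write $x\prec y$ if $y$ covers $x$, and $\epsilon(x,y)=1$ if $\omega(x)<\omega(y)$, $-1$ otherwise. $(P,\omega)$ is sign-graded of rank $r$ if $\sum_{i=1}^n\epsilon(x_{i-1},x_i)=r$ for every maximal chain $x_0\prec\cdots\prec x_n$; then each principal ideal $\Lambda_z=\{w\le z\}$ is likewise graded and $\rho(z)$ denotes its rank (the $\epsilon$-weight of any saturated chain from a minimal element to $z$). $\omega$ is canonical if $\rho$ takes values in $\{0,1\}$ and $\rho(x)<\rho(y)$ implies $\omega(x)<\omega(y)$. $\mathcal{L}(P,\omega)$ is the set of permutations $\omega(x_1)\cdots\omega(x_p)$ with $x_1,\dots,x_p$ a linear extension of $P$, and $W(P,\omega;t)=\sum_{\pi\in\mathcal{L}(P,\omega)}t^{\mathrm{des}(\pi)}$, $\mathrm{des}(\pi)=\#\{i:\pi_i>\pi_{i+1}\}$. (When $p-1-r$ is odd, $W(P,\omega;-1)=0$ and $CD(P)$ is $0$.) A permutation $\pi=\pi_1\cdots\pi_n$ is reverse alternating if $\pi_1<\pi_2>\pi_3<\cdots$. The components of $\pi\in\mathcal{L}(P,\omega)$ are the words $w_0,\dots,w_k$ in the factorization $\pi=w_0w_1\cdots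 w_k$ into maximal consecutive subwords such that all letters $a$ of a given $w_i$ have the same value $\rho(\omega^{-1}(a))$. *)

theory Defs
  imports Main
begin

definition poset_on :: "'a set \<Rightarrow> ('a \<Rightarrow> 'a \<Rightarrow> bool) \<Rightarrow> bool" where
  "poset_on P leq \<longleftrightarrow> finite P
     \<and> (\<forall>x\<in>P. leq x x)
     \<and> (\<forall>x\<in>P. \<forall>y\<in>P. leq x y \<and> leq y x \<longrightarrow> x = y)
     \<and> (\<forall>x\<in>P. \<forall>y\<in>P. \<forall>z\<in>P. leq x y \<and> leq y z \<longrightarrow> leq x z)"

definition less_in :: "('a \<Rightarrow> 'a \<Rightarrow> bool) \<Rightarrow> 'a \<Rightarrow> 'a \<Rightarrow> bool" where
  "less_in leq x y \<longleftrightarrow> leq x y \<and> x \<noteq> y"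

definition covers :: "'a set \<Rightarrow> ('a \<Rightarrow> 'a \<Rightarrow> bool) \<Rightarrow> 'a \<Rightarrow> 'a \<Rightarrow> bool" where
  "covers P leq x y \<longleftrightarrow> x \<in> P \<and> y \<in> P \<and> less_in leq x y
     \<and> \<not> (\<exists>z\<in>P. less_in leq x z \<and> less_in leq z y)"

definition eps :: "('a \<Rightarrow> nat) \<Rightarrow> 'a \<Rightarrow> 'a \<Rightarrow> int" where
  "eps \<omega> x y = (if \<omega> x < \<omega> y then 1 else -1)"

definition minimal_in :: "'a set \<Rightarrow> ('a \<Rightarrow> 'a \<Rightarrow> bool) \<Rightarrow> 'a \<Rightarrow> bool" where
  "minimal_in P leq x \<longleftrightarrow> x \<in> P \<and> \<not> (\<exists>y\<in>P. less_in leq y x)"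

definition maximal_in :: "'a set \<Rightarrow> ('a \<Rightarrow> 'a \<Rightarrow> bool) \<Rightarrow> 'a \<Rightarrow> bool" where
  "maximal_in P leq x \<longleftrightarrow> x \<in> P \<and> \<not> (\<exists>y\<in>P. less_in leq x y)"

definition sat_chain :: "'a set \<Rightarrow> ('a \<Rightarrow> 'a \<Rightarrow> bool) \<Rightarrow> 'a list \<Rightarrow> bool" where
  "sat_chain P leq xs \<longleftrightarrow> xs \<noteq> [] \<and> set xs \<subseteq> P
     \<and> (\<forall>i. Suc i < length xs \<longrightarrow> covers P leq (xs ! i) (xs ! Suc i))"

definition max_chain :: "'a set \<Rightarrow> ('a \<Rightarrow> 'a \<Rightarrow> bool) \<Rightarrow> 'a list \<Rightarrow> bool" where
  "max_chain P leq xs \<longleftrightarrow> sat_chain P leq xs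
     \<and> minimal_in P leq (hd xs) \<and> maximal_in P leq (last xs)"

definition chain_weight :: "('a \<Rightarrow> nat) \<Rightarrow> 'a list \<Rightarrow> int" where
  "chain_weight \<omega> xs = (\<Sum>i<length xs - 1. eps \<omega> (xs ! i) (xs ! Suc i))"

definition sign_graded :: "'a set \<Rightarrow> ('a \<Rightarrow> 'a \<Rightarrow> bool) \<Rightarrow> ('a \<Rightarrow> nat) \<Rightarrow> int \<Rightarrow> bool" where
  "sign_graded P leq \<omega> r \<longleftrightarrow> (\<forall>xs. max_chain P leq xs \<longrightarrow> chain_weight \<omega> xs = r)"

text \<open>rho z: the epsilon-weight of (any) saturated chain from a minimal element to z.\<close>
definition rho :: "'a set \<Rightarrow> ('a \<Rightarrow> 'a \<Rightarrow> bool) \<Rightarrow> ('a \<Rightarrow> nat) \<Rightarrow> 'a \<Rightarrow> int" where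
  "rho P leq \<omega> z = chain_weight \<omega>
     (SOME xs. sat_chain P leq xs \<and> minimal_in P leq (hd xs) \<and> last xs = z)"

definition canonical :: "'a set \<Rightarrow> ('a \<Rightarrow> 'a \<Rightarrow> bool) \<Rightarrow> ('a \<Rightarrow> nat) \<Rightarrow> bool" where
  "canonical P leq \<omega> \<longleftrightarrow> (\<forall>z\<in>P. rho P leq \<omega> z \<in> {0, 1})
     \<and> (\<forall>x\<in>P. \<forall>y\<in>P. rho P leq \<omega> x < rho P leq \<omega> y \<longrightarrow> \<omega> x < \<omega> y)"

definition linear_extension :: "'a set \<Rightarrow> ('a \<Rightarrow> 'a \<Rightarrow> bool) \<Rightarrow> 'a list \<Rightarrow> bool" where
  "linear_extension P leq xs \<longleftrightarrow> distinct xs \<and> set xs = P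
     \<and> (\<forall>i j. i < j \<and> j < length xs \<longrightarrow> \<not> less_in leq (xs ! j) (xs ! i))"

definition JH :: "'a set \<Rightarrow> ('a \<Rightarrow> 'a \<Rightarrow> bool) \<Rightarrow> ('a \<Rightarrow> nat) \<Rightarrow> nat list set" where
  "JH P leq \<omega> = {map \<omega> xs | xs. linear_extension P leq xs}"

definition des :: "nat list \<Rightarrow> nat" where
  "des \<pi> = card {i. Suc i < length \<pi> \<and> \<pi> ! i > \<pi> ! Suc i}"

definition W :: "'a set \<Rightarrow> ('a \<Rightarrow> 'a \<Rightarrow> bool) \<Rightarrow> ('a \<Rightarrow> nat) \<Rightarrow> int \<Rightarrow> int" where
  "W P leq \<omega> t = (\<Sum>\<pi>\<in>JH P leq \<omega>. t ^ des \<pi>)"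

definition CD :: "'a set \<Rightarrow> ('a \<Rightarrow> 'a \<Rightarrow> bool) \<Rightarrow> ('a \<Rightarrow> nat) \<Rightarrow> int \<Rightarrow> int" where
  "CD P leq \<omega> r = (let d = int (card P) - 1 - r in
     if odd d then 0 else (-1) ^ nat \<bar>d div 2\<bar> * W P leq \<omega> (-1))"

definition reverse_alternating :: "nat list \<Rightarrow> bool" where
  "reverse_alternating \<pi> \<longleftrightarrow> (\<forall>i. Suc i < length \<pi> \<longrightarrow>
     (if even i then \<pi> ! i < \<pi> ! Suc i else \<pi> ! i > \<pi> ! Suc i))"

text \<open>Every component (maximal run of consecutive letters a with equal value f a)
  has an odd number of letters; components are the runs i..j below.\<close>
definition components_odd :: "(nat \<Rightarrow> int) \<Rightarrow> nat list \<Rightarrow> bool" where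
  "components_odd f \<pi> \<longleftrightarrow> (\<forall>i j. i \<le> j \<and> j < length \<pi>
      \<and> (\<forall>k. i \<le> k \<and> k \<le> j \<longrightarrow> f (\<pi> ! k) = f (\<pi> ! i))
      \<and> (i = 0 \<or> f (\<pi> ! (i - 1)) \<noteq> f (\<pi> ! i))
      \<and> (Suc j = length \<pi> \<or> f (\<pi> ! Suc j) \<noteq> f (\<pi> ! j))
      \<longrightarrow> odd (Suc j - i))"

end

theory Submission
  imports Defs
begin
fun desr :: "nat list \<Rightarrow> nat" where
  "desr [] = 0"
| "desr [x] = 0"
| "desr (x # y # zs) = (if x > y then 1 else 0) + desr (y # zs)"

fun altr :: "nat \<Rightarrow> nat list \<Rightarrow> bool" where
  "altr b [] = True"
| "altr b [x] = True"
| "altr b (x # y # zs) = ((if even b then x < y else x > y) \<and> altr (Suc b) (y # zs))"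

lemma des_Cons_Cons:
  "{i. Suc i < length (x # y # zs) \<and> (x # y # zs) ! i > (x # y # zs) ! Suc i}
   = (if x > y then {0} else {}) \<union> Suc ` {i. Suc i < length (y # zs) \<and> (y # zs) ! i > (y # zs) ! Suc i}"
  apply (auto simp: image_iff split: if_splits)
  apply (case_tac xa; auto)+
  done

lemma des_eq_desr: "des xs = desr xs"
proof (induction xs rule: desr.induct)
  case 1 then show ?case by (simp add: des_def)
next
  case (2 x) then show ?case by (simp add: des_def)
next
  case (3 x y zs)
  have fin: "finite {i. Suc i < length (y # zs) \<and> (y # zs) ! i > (y # zs) ! Suc i}" by auto
  show ?case
    unfolding des_def des_Cons_Cons
    using 3 fin by (simp add: des_def card_image inj_on_def card_insert_if image_iff)
qed

lemma altr_def_eq: "(\<forall>i. Suc i < length xs \<longrightarrow> (if even (i + b) then xs ! i < xs ! Suc i else xs ! i > xs ! Suc i)) = altr b xs"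
proof (induction b xs rule: altr.induct)
  case (3 b x y zs)
  show ?case
  proof
    assume H: "\<forall>i. Suc i < length (x # y # zs) \<longrightarrow> (if even (i + b) then (x # y # zs) ! i < (x # y # zs) ! Suc i else (x # y # zs) ! i > (x # y # zs) ! Suc i)"
    have "(if even b then x < y else x > y)" using H[rule_format, of 0] by (auto split: if_splits)
    moreover have "\<forall>i. Suc i < length (y # zs) \<longrightarrow> (if even (i + Suc b) then (y # zs) ! i < (y # zs) ! Suc i else (y # zs) ! i > (y # zs) ! Suc i)"
      using H by (metis (no_types, lifting) Suc_less_eq add_Suc add_Suc_right length_Cons nth_Cons_Suc)
    ultimately show "altr b (x # y # zs)" using 3 by simp
  next
    assume "altr b (x # y # zs)"
    then have A: "(if even b then x < y else x > y)" and B: "\<forall>i. Suc i < length (y # zs) \<longrightarrow> (if even (i + Suc b) then (y # zs) ! i < (y # zs) ! Suc i else (y # zs) ! i > (y # zs) ! Suc i)"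
      using 3 by auto
    show "\<forall>i. Suc i < length (x # y # zs) \<longrightarrow> (if even (i + b) then (x # y # zs) ! i < (x # y # zs) ! Suc i else (x # y # zs) ! i > (x # y # zs) ! Suc i)"
    proof (intro allI impI)
      fix i assume "Suc i < length (x # y # zs)"
      then show "(if even (i + b) then (x # y # zs) ! i < (x # y # zs) ! Suc i else (x # y # zs) ! i > (x # y # zs) ! Suc i)"
        using A B[rule_format, of "i - 1"] by (cases i) auto
    qed
  qed
qed auto

lemma RA_eq: "reverse_alternating xs = altr 0 xs"
  unfolding reverse_alternating_def altr_def_eq[symmetric] by simp

lemma altr_Cons: "altr b (x # ys) = ((ys \<noteq> [] \<longrightarrow> (if even b then x < hd ys else x > hd ys)) \<and> altr (Suc b) ys)"
  by (cases ys) auto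

lemma desr_Cons: "desr (x # ys) = (if ys \<noteq> [] \<and> x > hd ys then 1 else 0) + desr ys"
  by (cases ys) auto

lemma desr_append: "desr (xs @ ys) = desr xs + desr ys + (if xs \<noteq> [] \<and> ys \<noteq> [] \<and> last xs > hd ys then 1 else 0)"
  by (induction xs rule: desr.induct) (auto simp: desr_Cons)

lemma altr_append: "altr b (xs @ ys) = (altr b xs \<and> altr (b + length xs) ys \<and>
   (xs \<noteq> [] \<and> ys \<noteq> [] \<longrightarrow> (if even (b + length xs - 1) then last xs < hd ys else last xs > hd ys)))"
  by (induction b xs rule: altr.induct) (auto simp: altr_Cons)

lemma altr_parity: "even b = even b' \<Longrightarrow> altr b xs = altr b' xs"
proof (induction b xs arbitrary: b' rule: altr.induct)
  case (3 b x y zs)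
  then show ?case using 3(1)[of "Suc b'"] by (cases b') auto
qed auto

definition compo :: "('a \<Rightarrow> int) \<Rightarrow> 'a list \<Rightarrow> bool" where
  "compo f xs \<longleftrightarrow> (\<forall>i j. i \<le> j \<and> j < length xs
      \<and> (\<forall>k. i \<le> k \<and> k \<le> j \<longrightarrow> f (xs ! k) = f (xs ! i))
      \<and> (i = 0 \<or> f (xs ! (i - 1)) \<noteq> f (xs ! i))
      \<and> (Suc j = length xs \<or> f (xs ! Suc j) \<noteq> f (xs ! j))
      \<longrightarrow> odd (Suc j - i))"

lemma components_odd_compo: "components_odd f xs = compo f xs"
  unfolding components_odd_def compo_def by simp

lemma compo_map_aux:
  assumes H: "compo f (map h xs)"
  shows "compo (\<lambda>x. f (h x)) xs"
  unfolding compo_def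
proof (intro allI impI, elim conjE)
  fix i j
  assume a1: "i \<le> j" and a2: "j < length xs"
    and a3: "\<forall>k. i \<le> k \<and> k \<le> j \<longrightarrow> f (h (xs ! k)) = f (h (xs ! i))"
    and a4: "i = 0 \<or> f (h (xs ! (i - 1))) \<noteq> f (h (xs ! i))"
    and a5: "Suc j = length xs \<or> f (h (xs ! Suc j)) \<noteq> f (h (xs ! j))"
  have b3: "\<forall>k. i \<le> k \<and> k \<le> j \<longrightarrow> f (map h xs ! k) = f (map h xs ! i)"
  proof (intro allI impI)
    fix k assume "i \<le> k \<and> k \<le> j"
    then have "f (h (xs ! k)) = f (h (xs ! i))" using a3 by blast
    then show "f (map h xs ! k) = f (map h xs ! i)" using a1 a2 \<open>i \<le> k \<and> k \<le> j\<close> by simp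
  qed
  have b4: "i = 0 \<or> f (map h xs ! (i - 1)) \<noteq> f (map h xs ! i)"
    using a1 a2 a4 by (cases "i = 0") simp_all
  have b5: "Suc j = length (map h xs) \<or> f (map h xs ! Suc j) \<noteq> f (map h xs ! j)"
    using a2 a5 by (cases "Suc j = length xs") simp_all
  show "odd (Suc j - i)"
    using H unfolding compo_def using a1 a2 b3 b4 b5 by (metis length_map)
qed

lemma compo_map_aux2:
  assumes H: "compo (\<lambda>x. f (h x)) xs"
  shows "compo f (map h xs)"
  unfolding compo_def
proof (intro allI impI, elim conjE)
  fix i j
  assume a1: "i \<le> j" and a2: "j < length (map h xs)"
    and a3: "\<forall>k. i \<le> k \<and> k \<le> j \<longrightarrow> f (map h xs ! k) = f (map h xs ! i)"
    and a4: "i = 0 \<or> f (map h xs ! (i - 1)) \<noteq> f (map h xs ! i)"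
    and a5: "Suc j = length (map h xs) \<or> f (map h xs ! Suc j) \<noteq> f (map h xs ! j)"
  have a2': "j < length xs" using a2 by simp
  have b3: "\<forall>k. i \<le> k \<and> k \<le> j \<longrightarrow> f (h (xs ! k)) = f (h (xs ! i))"
  proof (intro allI impI)
    fix k assume k: "i \<le> k \<and> k \<le> j"
    then have "f (map h xs ! k) = f (map h xs ! i)" using a3 by blast
    then show "f (h (xs ! k)) = f (h (xs ! i))" using a1 a2' k by simp
  qed
  have b4: "i = 0 \<or> f (h (xs ! (i - 1))) \<noteq> f (h (xs ! i))"
    using a1 a2' a4 by (cases "i = 0") simp_all
  have b5: "Suc j = length xs \<or> f (h (xs ! Suc j)) \<noteq> f (h (xs ! j))"
    using a2' a5 by (cases "Suc j = length xs") simp_all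
  show "odd (Suc j - i)"
    using H unfolding compo_def using a1 a2' b3 b4 b5 by blast
qed

lemma components_odd_map: "components_odd f (map \<omega> xs) = compo (\<lambda>x. f (\<omega> x)) xs"
  unfolding components_odd_compo using compo_map_aux compo_map_aux2 by blast

lemma compo_split:
  assumes ne: "\<sigma> \<noteq> []" and col: "\<forall>x\<in>set \<sigma>. g x = c0" and bd: "\<pi> = [] \<or> g (last \<pi>) \<noteq> c0"
  shows "compo g (\<pi> @ \<sigma>) = (compo g \<pi> \<and> odd (length \<sigma>))"
proof -
  define xs where "xs = \<pi> @ \<sigma>"
  define n where "n = length \<pi>"
  define m where "m = length \<sigma>"
  have len: "length xs = n + m" by (simp add: xs_def n_def m_def)
  have m1: "m \<ge> 1" using ne by (simp add: m_def Suc_le_eq)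
  have hi: "g (xs ! k) = c0" if "n \<le> k" "k < n + m" for k
  proof -
    have "xs ! k = \<sigma> ! (k - n)" using that by (simp add: xs_def n_def nth_append)
    moreover have "\<sigma> ! (k - n) \<in> set \<sigma>" using that by (simp add: m_def)
    ultimately show ?thesis using col by simp
  qed
  have lo: "xs ! k = \<pi> ! k" if "k < n" for k using that by (simp add: xs_def n_def nth_append)
  have bd': "g (xs ! (n - 1)) \<noteq> c0" if "n > 0"
  proof -
    have "\<pi> \<noteq> []" using that by (simp add: n_def)
    then have "xs ! (n - 1) = last \<pi>" using that lo[of "n - 1"] by (simp add: last_conv_nth n_def)
    then show ?thesis using bd \<open>\<pi> \<noteq> []\<close> by simp
  qed
  show ?thesis
    unfolding xs_def[symmetric]
  proof
    assume H: "compo g xs"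
    have "odd (Suc (n + m - 1) - n)"
    proof (rule H[unfolded compo_def, rule_format], intro conjI)
      show "\<forall>k. n \<le> k \<and> k \<le> n + m - 1 \<longrightarrow> g (xs ! k) = g (xs ! n)"
      proof (intro allI impI)
        fix k assume "n \<le> k \<and> k \<le> n + m - 1"
        then have "k < n + m" using m1 by linarith
        then show "g (xs ! k) = g (xs ! n)" using hi[of k] hi[of n] m1 \<open>n \<le> k \<and> k \<le> n + m - 1\<close> by simp
      qed
      show "n = 0 \<or> g (xs ! (n - 1)) \<noteq> g (xs ! n)" using bd' hi[of n] m1 by auto
    qed (use m1 len in simp_all)
    then have om: "odd m" using m1 by simp
    have "compo g \<pi>"
      unfolding compo_def
    proof (intro allI impI, elim conjE)
      fix i j
      assume a1: "i \<le> j" and a2: "j < length \<pi>"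
        and a3: "\<forall>k. i \<le> k \<and> k \<le> j \<longrightarrow> g (\<pi> ! k) = g (\<pi> ! i)"
        and a4: "i = 0 \<or> g (\<pi> ! (i - 1)) \<noteq> g (\<pi> ! i)"
        and a5: "Suc j = length \<pi> \<or> g (\<pi> ! Suc j) \<noteq> g (\<pi> ! j)"
      show "odd (Suc j - i)"
      proof (rule H[unfolded compo_def, rule_format], intro conjI)
        show "\<forall>k. i \<le> k \<and> k \<le> j \<longrightarrow> g (xs ! k) = g (xs ! i)"
        proof (intro allI impI)
          fix k assume k: "i \<le> k \<and> k \<le> j"
          then have "g (\<pi> ! k) = g (\<pi> ! i)" using a3 by blast
          then show "g (xs ! k) = g (xs ! i)" using lo[of k] lo[of i] k a1 a2 n_def by simp
        qed
        show "i = 0 \<or> g (xs ! (i - 1)) \<noteq> g (xs ! i)"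
          using a4 lo[of i] lo[of "i - 1"] a1 a2 n_def by (cases "i = 0") simp_all
        show "Suc j = length xs \<or> g (xs ! Suc j) \<noteq> g (xs ! j)"
        proof (cases "Suc j = n")
          case True
          then have "g (xs ! Suc j) = c0" using hi m1 by simp
          moreover have "g (xs ! j) \<noteq> c0" using bd' True by (metis diff_Suc_1 zero_less_Suc)
          ultimately show ?thesis by simp
        next
          case False
          then have "Suc j < n" using a2 n_def by simp
          then show ?thesis using a5 lo[of j] lo[of "Suc j"] False n_def by simp
        qed
      qed (use a1 a2 len n_def in simp_all)
    qed
    then show "compo g \<pi> \<and> odd (length \<sigma>)" using om m_def by simp
  next
    assume H: "compo g \<pi> \<and> odd (length \<sigma>)"
    show "compo g xs"
      unfolding compo_def
    proof (intro allI impI, elim conjE)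
      fix i j
      assume a1: "i \<le> j" and a2: "j < length xs"
        and a3: "\<forall>k. i \<le> k \<and> k \<le> j \<longrightarrow> g (xs ! k) = g (xs ! i)"
        and a4: "i = 0 \<or> g (xs ! (i - 1)) \<noteq> g (xs ! i)"
        and a5: "Suc j = length xs \<or> g (xs ! Suc j) \<noteq> g (xs ! j)"
      show "odd (Suc j - i)"
      proof (cases "j < n")
        case True
        show ?thesis
        proof (rule H[THEN conjunct1, unfolded compo_def, rule_format], intro conjI)
          show "\<forall>k. i \<le> k \<and> k \<le> j \<longrightarrow> g (\<pi> ! k) = g (\<pi> ! i)"
          proof (intro allI impI)
            fix k assume k: "i \<le> k \<and> k \<le> j"
            then have "g (xs ! k) = g (xs ! i)" using a3 by blast
            then show "g (\<pi> ! k) = g (\<pi> ! i)" using lo[of k] lo[of i] k a1 True by simp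
          qed
          show "i = 0 \<or> g (\<pi> ! (i - 1)) \<noteq> g (\<pi> ! i)"
            using a4 lo[of i] lo[of "i - 1"] a1 True by (cases "i = 0") simp_all
          show "Suc j = length \<pi> \<or> g (\<pi> ! Suc j) \<noteq> g (\<pi> ! j)"
          proof (cases "Suc j = n")
            case True
            then show ?thesis by (simp add: n_def)
          next
            case False
            then have "Suc j < n" using \<open>j < n\<close> by simp
            then show ?thesis using a5 lo[of j] lo[of "Suc j"] len n_def by simp
          qed
        qed (use a1 True n_def in simp_all)
      next
        case False
        have "i = n"
        proof (rule ccontr)
          assume "i \<noteq> n"
          then consider "i < n" | "i > n" by linarith
          then show False
          proof cases
            case 1
            have "i \<le> n - 1 \<and> n - 1 \<le> j" using 1 False by linarith
            then have "g (xs ! (n - 1)) = g (xs ! i)" using a3 by blast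
            moreover have "i \<le> n \<and> n \<le> j" using 1 False by linarith
            then have "g (xs ! n) = g (xs ! i)" using a3 by blast
            ultimately show False using bd' hi[of n] 1 m1 by simp
          next
            case 2
            have "g (xs ! (i - 1)) = c0" using hi[of "i - 1"] 2 a1 a2 len by simp
            moreover have "g (xs ! i) = c0" using hi[of i] 2 a1 a2 len by simp
            ultimately show False using a4 2 by simp
          qed
        qed
        moreover have "Suc j = n + m"
        proof (rule ccontr)
          assume ne: "Suc j \<noteq> n + m"
          then have "Suc j < n + m" using a2 len by simp
          then have "g (xs ! Suc j) = c0" "g (xs ! j) = c0" using hi False by simp_all
          then show False using a5 len ne by simp
        qed
        ultimately show ?thesis using H m_def by simp
      qed
    qed
  qed
qed

definition perms :: "'a set \<Rightarrow> 'a list set" where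
  "perms B = {\<sigma>. distinct \<sigma> \<and> set \<sigma> = B}"

definition Asum :: "('a \<Rightarrow> nat) \<Rightarrow> 'a set \<Rightarrow> int" where
  "Asum lab B = (\<Sum>\<sigma>\<in>perms B. (-1) ^ desr (map lab \<sigma>))"

definition Rsum :: "('a \<Rightarrow> nat) \<Rightarrow> nat \<Rightarrow> 'a set \<Rightarrow> int" where
  "Rsum lab b B = (\<Sum>\<sigma>\<in>perms B. (if altr b (map lab \<sigma>) then 1 else 0))"

lemma perms_finite: "finite B \<Longrightarrow> finite (perms B)"
proof -
  assume f: "finite B"
  have "perms B \<subseteq> {xs. set xs \<subseteq> B \<and> length xs \<le> card B}"
    unfolding perms_def using distinct_card by fastforce
  then show ?thesis using finite_lists_length_le[OF f] finite_subset by blast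
qed

lemma perms_empty[simp]: "perms {} = {[]}"
  unfolding perms_def by auto

lemma perms_decomp:
  assumes fin: "finite B" and nB: "n \<in> B"
  shows "(\<Sum>\<sigma>\<in>perms B. F \<sigma>) =
    (\<Sum>C\<in>Pow (B - {n}). \<Sum>\<alpha>\<in>perms C. \<Sum>\<beta>\<in>perms (B - {n} - C). F (\<alpha> @ n # \<beta>))"
proof -
  define S where "S = (SIGMA C:Pow (B - {n}). perms C \<times> perms (B - {n} - C))"
  define h where "h = (\<lambda>q :: 'a set \<times> 'a list \<times> 'a list. fst (snd q) @ n # snd (snd q))"
  have finP: "finite (Pow (B - {n}))" using fin by simp
  have finC: "\<forall>C\<in>Pow (B - {n}). finite (perms C \<times> perms (B - {n} - C))"
    using fin by (auto intro!: perms_finite intro: finite_subset)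
  have "(\<Sum>C\<in>Pow (B - {n}). \<Sum>\<alpha>\<in>perms C. \<Sum>\<beta>\<in>perms (B - {n} - C). F (\<alpha> @ n # \<beta>))
      = (\<Sum>C\<in>Pow (B - {n}). \<Sum>p\<in>perms C \<times> perms (B - {n} - C). F (fst p @ n # snd p))"
    by (simp add: sum.cartesian_product split_def)
  also have "\<dots> = (\<Sum>q\<in>S. F (h q))"
    unfolding S_def h_def by (subst sum.Sigma[OF finP finC]) (simp add: split_def)
  also have "\<dots> = (\<Sum>\<sigma>\<in>perms B. F \<sigma>)"
  proof (rule sum.reindex_bij_betw)
    show "bij_betw h S (perms B)"
      unfolding bij_betw_def
    proof
      show "inj_on h S"
      proof (rule inj_onI)
        fix q q' assume q: "q \<in> S" and q': "q' \<in> S" and eq: "h q = h q'"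
        obtain C \<alpha> \<beta> where qd: "q = (C, \<alpha>, \<beta>)" by (cases q) auto
        obtain C' \<alpha>' \<beta>' where qd': "q' = (C', \<alpha>', \<beta>')" by (cases q') auto
        have "n \<notin> set \<alpha>" "n \<notin> set \<beta>" using q qd unfolding S_def perms_def by auto
        then have "\<alpha> = \<alpha>' \<and> \<beta> = \<beta>'" using eq qd qd' h_def append_Cons_eq_iff by fastforce
        moreover have "C = set \<alpha>" "C' = set \<alpha>'" using q qd q' qd' unfolding S_def perms_def by auto
        ultimately show "q = q'" using qd qd' by simp
      qed
      show "h ` S = perms B"
      proof
        show "h ` S \<subseteq> perms B"
        proof
          fix x assume "x \<in> h ` S"
          then obtain C \<alpha> \<beta> where q: "(C, \<alpha>, \<beta>) \<in> S" and x: "x = \<alpha> @ n # \<beta>" unfolding h_def by auto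
          then have "C \<subseteq> B - {n}" "distinct \<alpha>" "set \<alpha> = C" "distinct \<beta>" "set \<beta> = B - {n} - C"
            unfolding S_def perms_def by auto
          then show "x \<in> perms B" unfolding x perms_def using nB by auto
        qed
        show "perms B \<subseteq> h ` S"
        proof
          fix \<sigma> assume s: "\<sigma> \<in> perms B"
          then have "n \<in> set \<sigma>" using nB unfolding perms_def by auto
          then obtain \<alpha> \<beta> where sp: "\<sigma> = \<alpha> @ n # \<beta>" using split_list by metis
          have d: "distinct \<sigma>" "set \<sigma> = B" using s unfolding perms_def by auto
          have "(set \<alpha>, \<alpha>, \<beta>) \<in> S" unfolding S_def perms_def using d sp by auto
          moreover have "h (set \<alpha>, \<alpha>, \<beta>) = \<sigma>" unfolding h_def sp by simp
          ultimately show "\<sigma> \<in> h ` S" by (metis image_eqI)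
        qed
      qed
    qed
  qed
  finally show ?thesis by simp
qed

lemma neg1_pow_eq: "(-1::int) ^ a = (if even a then 1 else -1)"
  by (simp add: minus_one_power_iff)

lemma sum_sum_prod: "(\<Sum>a\<in>A. \<Sum>b\<in>B. f a * (g b * (s::int))) = (\<Sum>a\<in>A. f a) * ((\<Sum>b\<in>B. g b) * s)"
proof -
  have "(\<Sum>a\<in>A. f a) * ((\<Sum>b\<in>B. g b) * s) = (\<Sum>a\<in>A. f a * ((\<Sum>b\<in>B. g b) * s))" by (rule sum_distrib_right)
  also have "\<dots> = (\<Sum>a\<in>A. \<Sum>b\<in>B. f a * (g b * s))" by (intro sum.cong refl) (simp add: sum_distrib_left sum_distrib_right)
  finally show ?thesis by simp
qed

lemma sum_sum_prod2: "(\<Sum>a\<in>A. \<Sum>b\<in>B. (s::int) * (f a * g b)) = s * ((\<Sum>a\<in>A. f a) * (\<Sum>b\<in>B. g b))"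
proof -
  have "s * ((\<Sum>a\<in>A. f a) * (\<Sum>b\<in>B. g b)) = s * (\<Sum>a\<in>A. f a * (\<Sum>b\<in>B. g b))"
    by (simp only: sum_distrib_right)
  also have "\<dots> = (\<Sum>a\<in>A. s * (f a * (\<Sum>b\<in>B. g b)))"
    by (simp only: sum_distrib_left)
  also have "\<dots> = (\<Sum>a\<in>A. \<Sum>b\<in>B. s * (f a * g b))" by (intro sum.cong refl) (simp add: sum_distrib_left)
  finally show ?thesis by simp
qed

lemma core_terms:
  assumes fin: "finite B" and inj: "inj_on lab B" and nB: "n \<in> B"
    and mx: "\<forall>x\<in>B - {n}. lab x < lab n"
  shows "Asum lab B = (\<Sum>C\<in>Pow (B - {n}). Asum lab C * Asum lab (B - {n} - C) * (if B - {n} - C = {} then 1 else -1))"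
    and "Rsum lab 0 B = (\<Sum>C\<in>Pow (B - {n}). (if (B - {n} - C \<noteq> {} \<longrightarrow> odd (card C)) \<and> (C \<noteq> {} \<longrightarrow> odd (card C))
             then Rsum lab 0 C * Rsum lab 0 (B - {n} - C) else 0))"
proof -
  show "Asum lab B = (\<Sum>C\<in>Pow (B - {n}). Asum lab C * Asum lab (B - {n} - C) * (if B - {n} - C = {} then 1 else -1))"
    unfolding Asum_def
  proof (subst perms_decomp[OF fin nB], rule sum.cong[OF refl])
    fix C assume C: "C \<in> Pow (B - {n})"
    define D where "D = B - {n} - C"
    have "(\<Sum>\<alpha>\<in>perms C. \<Sum>\<beta>\<in>perms D. (-1::int) ^ desr (map lab (\<alpha> @ n # \<beta>)))
        = (\<Sum>\<alpha>\<in>perms C. \<Sum>\<beta>\<in>perms D. (-1) ^ desr (map lab \<alpha>) * ((-1) ^ desr (map lab \<beta>) * (if D = {} then 1 else -1)))"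
    proof (intro sum.cong refl)
      fix \<alpha> \<beta> assume a: "\<alpha> \<in> perms C" and b: "\<beta> \<in> perms D"
      have la: "\<alpha> \<noteq> [] \<Longrightarrow> lab (last \<alpha>) < lab n"
      proof -
        assume "\<alpha> \<noteq> []"
        then have "last \<alpha> \<in> C" using a unfolding perms_def by auto
        then show ?thesis using mx C by auto
      qed
      have hb: "\<beta> \<noteq> [] \<Longrightarrow> lab (hd \<beta>) < lab n"
      proof -
        assume "\<beta> \<noteq> []"
        then have "hd \<beta> \<in> D" using b unfolding perms_def by auto
        then show ?thesis using mx C D_def by auto
      qed
      have bD: "(\<beta> = []) = (D = {})" using b unfolding perms_def by auto
      have "desr (map lab (\<alpha> @ n # \<beta>)) = desr (map lab \<alpha>) + desr (map lab \<beta>) + (if D = {} then 0 else 1)"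
        using la hb bD by (auto simp: desr_append desr_Cons last_map hd_map)
      then show "(-1::int) ^ desr (map lab (\<alpha> @ n # \<beta>)) = (-1) ^ desr (map lab \<alpha>) * ((-1) ^ desr (map lab \<beta>) * (if D = {} then 1 else -1))"
        by (simp add: power_add)
    qed
    also have "\<dots> = (\<Sum>\<alpha>\<in>perms C. (-1) ^ desr (map lab \<alpha>)) * ((\<Sum>\<beta>\<in>perms D. (-1) ^ desr (map lab \<beta>)) * (if D = {} then 1 else -1))"
      by (rule sum_sum_prod)
    finally show "(\<Sum>\<alpha>\<in>perms C. \<Sum>\<beta>\<in>perms (B - {n} - C). (-1::int) ^ desr (map lab (\<alpha> @ n # \<beta>))) =
         (\<Sum>\<sigma>\<in>perms C. (-1) ^ desr (map lab \<sigma>)) * (\<Sum>\<sigma>\<in>perms (B - {n} - C). (-1) ^ desr (map lab \<sigma>)) *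
         (if B - {n} - C = {} then 1 else -1)"
      unfolding D_def by (simp add: mult.assoc)
  qed
  show "Rsum lab 0 B = (\<Sum>C\<in>Pow (B - {n}). (if (B - {n} - C \<noteq> {} \<longrightarrow> odd (card C)) \<and> (C \<noteq> {} \<longrightarrow> odd (card C))
             then Rsum lab 0 C * Rsum lab 0 (B - {n} - C) else 0))"
    unfolding Rsum_def
  proof (subst perms_decomp[OF fin nB], rule sum.cong[OF refl])
    fix C assume C: "C \<in> Pow (B - {n})"
    define D where "D = B - {n} - C"
    define cond where "cond = ((D \<noteq> {} \<longrightarrow> odd (card C)) \<and> (C \<noteq> {} \<longrightarrow> odd (card C)))"
    have "(\<Sum>\<alpha>\<in>perms C. \<Sum>\<beta>\<in>perms D. (if altr 0 (map lab (\<alpha> @ n # \<beta>)) then 1 else 0::int))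
        = (\<Sum>\<alpha>\<in>perms C. \<Sum>\<beta>\<in>perms D. (if cond then 1 else 0) * ((if altr 0 (map lab \<alpha>) then 1 else 0) * (if altr 0 (map lab \<beta>) then 1 else 0)))"
    proof (intro sum.cong refl)
      fix \<alpha> \<beta> assume a: "\<alpha> \<in> perms C" and b: "\<beta> \<in> perms D"
      have la: "\<alpha> \<noteq> [] \<Longrightarrow> lab (last \<alpha>) < lab n"
      proof -
        assume "\<alpha> \<noteq> []"
        then have "last \<alpha> \<in> C" using a unfolding perms_def by auto
        then show ?thesis using mx C by auto
      qed
      have hb: "\<beta> \<noteq> [] \<Longrightarrow> lab (hd \<beta>) < lab n"
      proof -
        assume "\<beta> \<noteq> []"
        then have "hd \<beta> \<in> D" using b unfolding perms_def by auto
        then show ?thesis using mx C D_def by auto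
      qed
      have bD: "(\<beta> = []) = (D = {})" using b unfolding perms_def by auto
      have aC: "(\<alpha> = []) = (C = {})" using a unfolding perms_def by auto
      have lenC: "length \<alpha> = card C" using a unfolding perms_def by (auto simp: distinct_card)
      have "altr 0 (map lab (\<alpha> @ n # \<beta>)) = (altr 0 (map lab \<alpha>) \<and> altr (length \<alpha>) (lab n # map lab \<beta>) \<and>
             (\<alpha> \<noteq> [] \<longrightarrow> (if even (length \<alpha> - 1) then lab (last \<alpha>) < lab n else lab (last \<alpha>) > lab n)))"
        by (simp add: altr_append last_map)
      also have "\<dots> = (altr 0 (map lab \<alpha>) \<and> (\<beta> \<noteq> [] \<longrightarrow> odd (length \<alpha>)) \<and> altr (Suc (length \<alpha>)) (map lab \<beta>) \<and>
             (\<alpha> \<noteq> [] \<longrightarrow> odd (length \<alpha>)))"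
        using la hb by (cases "\<alpha> = []"; cases "\<beta> = []") (auto simp: altr_Cons hd_map)
      also have "\<dots> = (cond \<and> altr 0 (map lab \<alpha>) \<and> altr 0 (map lab \<beta>))"
      proof (cases "odd (length \<alpha>)")
        case True
        then have "altr (Suc (length \<alpha>)) (map lab \<beta>) = altr 0 (map lab \<beta>)" by (intro altr_parity) simp
        then show ?thesis using True lenC unfolding cond_def by auto
      next
        case False
        then show ?thesis using lenC aC bD unfolding cond_def by (cases "\<alpha> = []"; cases "\<beta> = []") auto
      qed
      finally show "(if altr 0 (map lab (\<alpha> @ n # \<beta>)) then 1 else 0::int) = (if cond then 1 else 0) * ((if altr 0 (map lab \<alpha>) then 1 else 0) * (if altr 0 (map lab \<beta>) then 1 else 0))"
        by simp
    qed
    also have "\<dots> = (if cond then 1 else 0) * ((\<Sum>\<alpha>\<in>perms C. (if altr 0 (map lab \<alpha>) then 1 else 0)) * (\<Sum>\<beta>\<in>perms D. (if altr 0 (map lab \<beta>) then 1 else 0)))"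
      by (rule sum_sum_prod2)
    finally show "(\<Sum>\<alpha>\<in>perms C. \<Sum>\<beta>\<in>perms (B - {n} - C). (if altr 0 (map lab (\<alpha> @ n # \<beta>)) then 1 else 0::int)) =
         (if (B - {n} - C \<noteq> {} \<longrightarrow> odd (card C)) \<and> (C \<noteq> {} \<longrightarrow> odd (card C))
          then (\<Sum>\<sigma>\<in>perms C. if altr 0 (map lab \<sigma>) then 1 else 0) * (\<Sum>\<sigma>\<in>perms (B - {n} - C). if altr 0 (map lab \<sigma>) then 1 else 0)
          else 0)"
      unfolding D_def cond_def by simp
  qed
qed

lemma core0:
  assumes "finite B" "inj_on lab B"
  shows "Asum lab B = (if B = {} then 1 else if even (card B) then 0
                       else (-1) ^ ((card B - 1) div 2) * Rsum lab 0 B)"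
  using assms
proof (induction "card B" arbitrary: B rule: less_induct)
  case less
  note fin = less.prems(1) and inj = less.prems(2)
  show ?case
  proof (cases "B = {}")
    case True
    then show ?thesis by (simp add: Asum_def)
  next
    case ne: False
    obtain n where nB: "n \<in> B" and nmax: "lab n = Max (lab ` B)"
    proof -
      have "Max (lab ` B) \<in> lab ` B" using Max_in[of "lab ` B"] fin ne by auto
      then show ?thesis using that by auto
    qed
    have mx: "\<forall>x\<in>B - {n}. lab x < lab n"
    proof
      fix x assume x: "x \<in> B - {n}"
      have "lab x \<le> lab n" using nmax x fin by simp
      moreover have "lab x \<noteq> lab n" using inj x nB by (auto simp: inj_on_def)
      ultimately show "lab x < lab n" by simp
    qed
    define m where "m = card B"
    have m1: "m \<ge> 1" using fin ne m_def by (simp add: Suc_le_eq card_gt_0_iff)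
    have cardBn: "card (B - {n}) = m - 1" using fin nB m_def by simp
    have IH: "Asum lab C = (if C = {} then 1 else if even (card C) then 0
                       else (-1) ^ ((card C - 1) div 2) * Rsum lab 0 C)" if "C \<subseteq> B - {n}" for C
    proof (rule less.hyps)
      have "C \<subset> B" using that nB by auto
      then show "card C < card B" using fin psubset_card_mono by blast
      show "finite C" using that fin finite_subset by blast
      show "inj_on lab C" using that inj inj_on_subset by blast
    qed
    have cardD: "card C + card (B - {n} - C) = m - 1" if "C \<subseteq> B - {n}" for C
    proof -
      have fC: "finite C" using that fin finite_subset by blast
      have "card (B - {n} - C) = card (B - {n}) - card C" using card_Diff_subset[OF fC that] .
      moreover have "card C \<le> card (B - {n})" using card_mono[OF _ that] fin by simp
      ultimately show ?thesis using cardBn by simp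
    qed
    note terms = core_terms[OF fin inj nB mx]
    show ?thesis
    proof (cases "even m")
      case True
      then have m2: "m \<ge> 2" using m1 by presburger
      have Bn_ne: "B - {n} \<noteq> {}"
      proof
        assume "B - {n} = {}"
        then have "card (B - {n}) = 0" by (simp only: card.empty)
        then show False using cardBn m2 by simp
      qed
      define f where "f C = Asum lab C * Asum lab (B - {n} - C) * (if B - {n} - C = {} then 1 else -1)" for C
      have zero: "f C = 0" if "C \<in> Pow (B - {n}) - {{}, B - {n}}" for C
      proof -
        have C: "C \<subseteq> B - {n}" "C \<noteq> {}" "B - {n} - C \<noteq> {}" using that by auto
        have "odd (card C + card (B - {n} - C))" using cardD[OF C(1)] True m1 by simp
        then have "even (card C) \<or> even (card (B - {n} - C))" by auto
        then have "Asum lab C = 0 \<or> Asum lab (B - {n} - C) = 0" using IH[OF C(1)] IH[of "B - {n} - C"] C by auto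
        then show ?thesis unfolding f_def by auto
      qed
      have "Asum lab B = sum f (Pow (B - {n}))" using terms(1) unfolding f_def by simp
      also have "\<dots> = sum f {{}, B - {n}}"
        by (rule sum.mono_neutral_right) (use fin zero in auto)
      also have "\<dots> = f {} + f (B - {n})" using Bn_ne by simp
      also have "\<dots> = 0" unfolding f_def using Bn_ne by (simp add: Asum_def)
      finally show ?thesis using ne True m_def by simp
    next
      case False
      have "Asum lab B = (\<Sum>C\<in>Pow (B - {n}). (-1) ^ ((m - 1) div 2) * (if (B - {n} - C \<noteq> {} \<longrightarrow> odd (card C)) \<and> (C \<noteq> {} \<longrightarrow> odd (card C))
             then Rsum lab 0 C * Rsum lab 0 (B - {n} - C) else 0))"
        unfolding terms(1)
      proof (rule sum.cong[OF refl])
        fix C assume "C \<in> Pow (B - {n})"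
        then have C: "C \<subseteq> B - {n}" by simp
        define D where "D = B - {n} - C"
        have D: "D \<subseteq> B - {n}" unfolding D_def by auto
        have kl: "card C + card D = m - 1" using cardD[OF C] D_def by simp
        have ev: "even (m - 1)" using False m1 by simp
        show "Asum lab C * Asum lab (B - {n} - C) * (if B - {n} - C = {} then 1 else - 1) =
          (- 1) ^ ((m - 1) div 2) * (if (B - {n} - C \<noteq> {} \<longrightarrow> odd (card C)) \<and> (C \<noteq> {} \<longrightarrow> odd (card C))
             then Rsum lab 0 C * Rsum lab 0 (B - {n} - C) else 0)"
        proof -
        have "Asum lab C * Asum lab D * (if D = {} then 1 else - 1) =
          (- 1) ^ ((m - 1) div 2) * (if (D \<noteq> {} \<longrightarrow> odd (card C)) \<and> (C \<noteq> {} \<longrightarrow> odd (card C))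
             then Rsum lab 0 C * Rsum lab 0 D else 0)"
        proof (cases "C = {}"; cases "D = {}")
          assume "C = {}" "D = {}"
          then have "m = 1" using kl m1 by simp
          then show ?thesis using \<open>C = {}\<close> \<open>D = {}\<close> by (simp add: Asum_def Rsum_def)
        next
          assume c: "C = {}" and d: "D \<noteq> {}"
          have fD: "finite D" using fin D finite_subset by blast
          have cc: "card D = m - 1" "card D > 0" using kl c apply simp using fD d card_gt_0_iff by blast
          then have "Asum lab D = 0" using IH[OF D] d ev by simp
          then show ?thesis using c d cc ev by simp
        next
          assume c: "C \<noteq> {}" and d: "D = {}"
          have fC: "finite C" using fin C finite_subset by blast
          have cc: "card C = m - 1" "card C > 0" using kl d apply simp using fC c card_gt_0_iff by blast
          then have "Asum lab C = 0" using IH[OF C] c ev by simp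
          then show ?thesis using c d cc ev by simp
        next
          assume c: "C \<noteq> {}" and d: "D \<noteq> {}"
          show ?thesis
          proof (cases "odd (card C)")
            case True
            then have oD: "odd (card D)" using kl ev by presburger
            obtain a where a: "card C = 2 * a + 1" using True oddE by blast
            obtain b where b: "card D = 2 * b + 1" using oD oddE by blast
            have e: "(m - 1) div 2 = a + b + 1" using kl a b by simp
            have "Asum lab C = (-1) ^ a * Rsum lab 0 C" using IH[OF C] c a by simp
            moreover have "Asum lab D = (-1) ^ b * Rsum lab 0 D" using IH[OF D] d b by simp
            ultimately show ?thesis using c d True e by (simp add: power_add)
          next
            case False
            then have "Asum lab C = 0" using IH[OF C] c by simp
            then show ?thesis using c d False by simp
          qed
        qed
        then show ?thesis unfolding D_def .
        qed
      qed
      also have "\<dots> = (-1) ^ ((m - 1) div 2) * Rsum lab 0 B"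
        unfolding terms(2) by (simp add: sum_distrib_left)
      finally show ?thesis using ne False m_def by simp
    qed
  qed
qed

lemma altr_dual: "\<forall>x\<in>set xs. x \<le> K \<Longrightarrow> distinct xs \<Longrightarrow> altr b (map (\<lambda>x. K - x) xs) = altr (Suc b) xs"
  by (induction b xs rule: altr.induct) auto

lemma desr_dual: "\<forall>x\<in>set xs. x \<le> K \<Longrightarrow> distinct xs \<Longrightarrow> desr (map (\<lambda>x. K - x) xs) + desr xs = length xs - 1"
proof (induction xs rule: desr.induct)
  case (3 x y zs)
  then have IH: "desr (map (\<lambda>x. K - x) (y # zs)) + desr (y # zs) = length (y # zs) - 1" by simp
  have "x \<noteq> y" "x \<le> K" "y \<le> K" using 3 by auto
  then have "(if K - x > K - y then 1 else 0) + (if x > y then 1 else 0) = (1::nat)" by auto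
  then show ?case using IH by simp
qed auto

lemma core_any:
  assumes fin: "finite B" and inj: "inj_on lab B" and ne: "B \<noteq> {}" and od: "odd (card B)"
  shows "Asum lab B = (-1) ^ ((card B - 1) div 2) * Rsum lab b B"
proof (cases "even b")
  case True
  have "Rsum lab b B = Rsum lab 0 B" unfolding Rsum_def using altr_parity[of b 0] True by simp
  then show ?thesis using core0[OF fin inj] ne od by simp
next
  case False
  define K where "K = Max (lab ` B)"
  have le: "lab x \<le> K" if "x \<in> B" for x using that fin unfolding K_def by simp
  define lab' where "lab' = (\<lambda>x. K - lab x)"
  have inj': "inj_on lab' B"
  proof (rule inj_onI)
    fix x y assume "x \<in> B" "y \<in> B" "lab' x = lab' y"
    then have "lab x = lab y" using le unfolding lab'_def by (metis diff_diff_cancel)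
    then show "x = y" using inj \<open>x \<in> B\<close> \<open>y \<in> B\<close> by (auto simp: inj_on_def)
  qed
  have mapd: "map lab' \<sigma> = map (\<lambda>x. K - x) (map lab \<sigma>)" for \<sigma> unfolding lab'_def by simp
  have A: "Asum lab' B = Asum lab B"
    unfolding Asum_def
  proof (rule sum.cong[OF refl])
    fix \<sigma> assume s: "\<sigma> \<in> perms B"
    then have d: "distinct (map lab \<sigma>)" and bnd: "\<forall>x\<in>set (map lab \<sigma>). x \<le> K"
      using inj le unfolding perms_def by (auto simp: distinct_map inj_on_subset)
    have "length (map lab \<sigma>) = card B" using s unfolding perms_def by (auto simp: distinct_card)
    moreover have "desr (map lab' \<sigma>) + desr (map lab \<sigma>) = length (map lab \<sigma>) - 1"
      unfolding mapd by (rule desr_dual[OF bnd d])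
    ultimately have "even (desr (map lab' \<sigma>) + desr (map lab \<sigma>))" using od by simp
    then show "(-1::int) ^ desr (map lab' \<sigma>) = (-1) ^ desr (map lab \<sigma>)"
      by (simp add: neg1_pow_eq)
  qed
  have R: "Rsum lab' 0 B = Rsum lab b B"
    unfolding Rsum_def
  proof (rule sum.cong[OF refl])
    fix \<sigma> assume s: "\<sigma> \<in> perms B"
    then have d: "distinct (map lab \<sigma>)" and bnd: "\<forall>x\<in>set (map lab \<sigma>). x \<le> K"
      using inj le unfolding perms_def by (auto simp: distinct_map inj_on_subset)
    have "altr 0 (map lab' \<sigma>) = altr 1 (map lab \<sigma>)" unfolding mapd using altr_dual[OF bnd d, of 0] by simp
    also have "\<dots> = altr b (map lab \<sigma>)" using False by (intro altr_parity) simp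
    finally show "(if altr 0 (map lab' \<sigma>) then 1 else 0::int) = (if altr b (map lab \<sigma>) then 1 else 0)" by simp
  qed
  show ?thesis using core0[OF fin inj'] ne od A R by simp
qed

lemma sat_chain_Cons:
  "sat_chain P leq (x # zs) = ((zs = [] \<and> x \<in> P) \<or> (zs \<noteq> [] \<and> covers P leq x (hd zs) \<and> sat_chain P leq zs))"
proof (cases zs)
  case Nil
  then show ?thesis by (simp add: sat_chain_def)
next
  case (Cons z zs')
  show ?thesis
  proof
    assume H: "sat_chain P leq (x # zs)"
    have c0: "covers P leq x (hd zs)" using H Cons unfolding sat_chain_def by force
    have "\<forall>i. Suc i < length zs \<longrightarrow> covers P leq (zs ! i) (zs ! Suc i)"
    proof (intro allI impI)
      fix i assume "Suc i < length zs"
      then have "Suc (Suc i) < length (x # zs)" by simp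
      then show "covers P leq (zs ! i) (zs ! Suc i)" using H unfolding sat_chain_def by fastforce
    qed
    then show "(zs = [] \<and> x \<in> P) \<or> (zs \<noteq> [] \<and> covers P leq x (hd zs) \<and> sat_chain P leq zs)"
      using H c0 Cons unfolding sat_chain_def by auto
  next
    assume H: "(zs = [] \<and> x \<in> P) \<or> (zs \<noteq> [] \<and> covers P leq x (hd zs) \<and> sat_chain P leq zs)"
    then have c0: "covers P leq x (hd zs)" and sc: "sat_chain P leq zs" using Cons by auto
    have xP: "x \<in> P" using c0 unfolding covers_def by simp
    have "\<forall>i. Suc i < length (x # zs) \<longrightarrow> covers P leq ((x # zs) ! i) ((x # zs) ! Suc i)"
    proof (intro allI impI)
      fix i assume i: "Suc i < length (x # zs)"
      show "covers P leq ((x # zs) ! i) ((x # zs) ! Suc i)"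
      proof (cases i)
        case 0
        then show ?thesis using c0 Cons by simp
      next
        case (Suc j)
        then show ?thesis using sc i unfolding sat_chain_def by simp
      qed
    qed
    then show "sat_chain P leq (x # zs)" using sc xP unfolding sat_chain_def by auto
  qed
qed

lemma chain_weight_Cons:
  "chain_weight \<omega> (x # zs) = (if zs = [] then 0 else eps \<omega> x (hd zs) + chain_weight \<omega> zs)"
proof (cases zs)
  case Nil
  then show ?thesis by (simp add: chain_weight_def)
next
  case (Cons z zs')
  have "chain_weight \<omega> (x # zs) = (\<Sum>i<Suc (length zs'). eps \<omega> ((x # zs) ! i) ((x # zs) ! Suc i))"
    unfolding chain_weight_def using Cons by simp
  also have "\<dots> = eps \<omega> x z + (\<Sum>i<length zs'. eps \<omega> (zs ! i) (zs ! Suc i))"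
    by (subst sum.lessThan_Suc_shift) (simp add: Cons)
  also have "\<dots> = eps \<omega> x (hd zs) + chain_weight \<omega> zs"
    unfolding chain_weight_def using Cons by simp
  finally show ?thesis using Cons by simp
qed

lemma chain_append:
  assumes "xs \<noteq> []" "zs \<noteq> []" "last xs = hd zs" "sat_chain P leq xs" "sat_chain P leq zs"
  shows "sat_chain P leq (xs @ tl zs) \<and> chain_weight \<omega> (xs @ tl zs) = chain_weight \<omega> xs + chain_weight \<omega> zs
         \<and> hd (xs @ tl zs) = hd xs \<and> last (xs @ tl zs) = last zs"
  using assms
proof (induction xs)
  case Nil
  then show ?case by simp
next
  case (Cons x xs')
  show ?case
  proof (cases "xs' = []")
    case True
    then have "zs = x # tl zs" using Cons by (metis last_ConsL list.collapse)
    then show ?thesis using Cons True by (metis append_Cons append_Nil chain_weight_Cons add_0 list.sel(1))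
  next
    case False
    have IH: "sat_chain P leq (xs' @ tl zs) \<and> chain_weight \<omega> (xs' @ tl zs) = chain_weight \<omega> xs' + chain_weight \<omega> zs
         \<and> hd (xs' @ tl zs) = hd xs' \<and> last (xs' @ tl zs) = last zs"
      using Cons False sat_chain_Cons[of P leq x xs'] by auto
    have cx: "covers P leq x (hd xs')" using Cons.prems(4) False sat_chain_Cons[of P leq x xs'] by auto
    have ne: "xs' @ tl zs \<noteq> []" using False by simp
    have "sat_chain P leq (x # (xs' @ tl zs))" using IH cx ne sat_chain_Cons[of P leq x "xs' @ tl zs"] by auto
    moreover have "chain_weight \<omega> (x # (xs' @ tl zs)) = chain_weight \<omega> (x # xs') + chain_weight \<omega> zs"
      using IH ne False by (simp add: chain_weight_Cons)
    moreover have "last (x # (xs' @ tl zs)) = last zs" using IH last_ConsR[OF ne, of x] by simp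
    ultimately show ?thesis by simp
  qed
qed

lemma less_trans_P:
  assumes "poset_on P leq" "x \<in> P" "y \<in> P" "z \<in> P" "less_in leq x y" "less_in leq y z"
  shows "less_in leq x z"
proof -
  have "leq x z" using assms unfolding poset_on_def less_in_def by blast
  moreover have "x \<noteq> z"
  proof
    assume "x = z"
    then have "leq y x" "leq x y" using assms unfolding less_in_def by auto
    then have "x = y" using assms unfolding poset_on_def by blast
    then show False using assms unfolding less_in_def by simp
  qed
  ultimately show ?thesis unfolding less_in_def by simp
qed

lemma ex_max_rel:
  assumes po: "poset_on P leq" and fin: "finite T" and ne: "T \<noteq> {}" and sub: "T \<subseteq> P"
  shows "\<exists>m\<in>T. \<forall>b\<in>T. \<not> less_in leq m b"
  using fin ne sub
proof (induction T rule: finite_ne_induct)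
  case (singleton x)
  then show ?case by (auto simp: less_in_def)
next
  case (insert x F)
  then obtain m where m: "m \<in> F" "\<forall>b\<in>F. \<not> less_in leq m b" by auto
  show ?case
  proof (cases "less_in leq m x")
    case True
    have "\<forall>b\<in>insert x F. \<not> less_in leq x b"
    proof
      fix b assume b: "b \<in> insert x F"
      show "\<not> less_in leq x b"
      proof
        assume xb: "less_in leq x b"
        then have "b \<noteq> x" unfolding less_in_def by auto
        then have "b \<in> F" using b by simp
        then have "less_in leq m b" using less_trans_P[OF po _ _ _ True xb] insert.prems m by auto
        then show False using m \<open>b \<in> F\<close> by blast
      qed
    qed
    then show ?thesis by blast
  next
    case False
    then show ?thesis using m by auto
  qed
qed

lemma ex_min_rel:
  assumes po: "poset_on P leq" and fin: "finite T" and ne: "T \<noteq> {}" and sub: "T \<subseteq> P"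
  shows "\<exists>m\<in>T. \<forall>b\<in>T. \<not> less_in leq b m"
  using fin ne sub
proof (induction T rule: finite_ne_induct)
  case (singleton x)
  then show ?case by (auto simp: less_in_def)
next
  case (insert x F)
  then obtain m where m: "m \<in> F" "\<forall>b\<in>F. \<not> less_in leq b m" by auto
  show ?case
  proof (cases "less_in leq x m")
    case True
    have "\<forall>b\<in>insert x F. \<not> less_in leq b x"
    proof
      fix b assume b: "b \<in> insert x F"
      show "\<not> less_in leq b x"
      proof
        assume xb: "less_in leq b x"
        then have "b \<noteq> x" unfolding less_in_def by auto
        then have "b \<in> F" using b by simp
        then have "less_in leq b m" using less_trans_P[OF po _ _ _ xb True] insert.prems m by auto
        then show False using m \<open>b \<in> F\<close> by blast
      qed
    qed
    then show ?thesis by blast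
  next
    case False
    then show ?thesis using m by auto
  qed
qed

lemma chain_down:
  assumes po: "poset_on P leq" and z: "z \<in> P"
  shows "\<exists>xs. sat_chain P leq xs \<and> minimal_in P leq (hd xs) \<and> last xs = z"
  using z
proof (induction "card {y\<in>P. less_in leq y z}" arbitrary: z rule: less_induct)
  case less
  have fin: "finite P" using po unfolding poset_on_def by simp
  show ?case
  proof (cases "\<exists>y\<in>P. less_in leq y z")
    case False
    then have "sat_chain P leq [z] \<and> minimal_in P leq (hd [z]) \<and> last [z] = z"
      using less.prems by (simp add: sat_chain_def minimal_in_def)
    then show ?thesis by blast
  next
    case True
    define T where "T = {y\<in>P. less_in leq y z}"
    have "T \<noteq> {}" "finite T" "T \<subseteq> P" using True fin unfolding T_def by auto
    then obtain y0 where y0: "y0 \<in> T" "\<forall>b\<in>T. \<not> less_in leq y0 b" using ex_max_rel[OF po] by blast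
    have cov: "covers P leq y0 z" using y0 less.prems unfolding covers_def T_def by auto
    have sub: "{y\<in>P. less_in leq y y0} \<subset> T"
    proof
      show "{y\<in>P. less_in leq y y0} \<subseteq> T"
        using y0 less.prems less_trans_P[OF po] unfolding T_def by blast
      show "{y\<in>P. less_in leq y y0} \<noteq> T" using y0 by (auto simp: less_in_def)
    qed
    have "card {y\<in>P. less_in leq y y0} < card T" using psubset_card_mono[OF \<open>finite T\<close> sub] .
    moreover have "y0 \<in> P" using y0 unfolding T_def by simp
    ultimately obtain xs where xs: "sat_chain P leq xs" "minimal_in P leq (hd xs)" "last xs = y0"
      using less.hyps unfolding T_def by blast
    have sc2: "sat_chain P leq [y0, z]" using cov less.prems by (simp add: sat_chain_Cons)
    have ne: "xs \<noteq> []" using xs unfolding sat_chain_def by simp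
    have "sat_chain P leq (xs @ tl [y0, z]) \<and> hd (xs @ tl [y0, z]) = hd xs \<and> last (xs @ tl [y0, z]) = last [y0, z]"
      using chain_append[OF ne _ _ xs(1) sc2] xs by simp
    then show ?thesis using xs by (metis last.simps list.distinct(1))
  qed
qed

lemma chain_up:
  assumes po: "poset_on P leq" and z: "z \<in> P"
  shows "\<exists>zs. sat_chain P leq zs \<and> hd zs = z \<and> maximal_in P leq (last zs)"
  using z
proof (induction "card {y\<in>P. less_in leq z y}" arbitrary: z rule: less_induct)
  case less
  have fin: "finite P" using po unfolding poset_on_def by simp
  show ?case
  proof (cases "\<exists>y\<in>P. less_in leq z y")
    case False
    then have "sat_chain P leq [z] \<and> hd [z] = z \<and> maximal_in P leq (last [z])"
      using less.prems by (simp add: sat_chain_def maximal_in_def)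
    then show ?thesis by blast
  next
    case True
    define T where "T = {y\<in>P. less_in leq z y}"
    have "T \<noteq> {}" "finite T" "T \<subseteq> P" using True fin unfolding T_def by auto
    then obtain y0 where y0: "y0 \<in> T" "\<forall>b\<in>T. \<not> less_in leq b y0" using ex_min_rel[OF po] by blast
    have cov: "covers P leq z y0" using y0 less.prems unfolding covers_def T_def by auto
    have sub: "{y\<in>P. less_in leq y0 y} \<subset> T"
    proof
      show "{y\<in>P. less_in leq y0 y} \<subseteq> T"
        using y0 less.prems less_trans_P[OF po] unfolding T_def by blast
      show "{y\<in>P. less_in leq y0 y} \<noteq> T" using y0 by (auto simp: less_in_def)
    qed
    have "card {y\<in>P. less_in leq y0 y} < card T" using psubset_card_mono[OF \<open>finite T\<close> sub] .
    moreover have "y0 \<in> P" using y0 unfolding T_def by simp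
    ultimately obtain zs where zs: "sat_chain P leq zs" "hd zs = y0" "maximal_in P leq (last zs)"
      using less.hyps unfolding T_def by blast
    have ne: "zs \<noteq> []" using zs unfolding sat_chain_def by simp
    have "sat_chain P leq (z # zs)" using cov zs ne by (simp add: sat_chain_Cons)
    then show ?thesis using zs ne by (metis last_ConsR list.sel(1))
  qed
qed

lemma rho_wd:
  assumes po: "poset_on P leq" and sg: "sign_graded P leq \<omega> r"
    and xs: "sat_chain P leq xs" "minimal_in P leq (hd xs)" "last xs = z"
    and ys: "sat_chain P leq ys" "minimal_in P leq (hd ys)" "last ys = z"
  shows "chain_weight \<omega> xs = chain_weight \<omega> ys"
proof -
  have zP: "z \<in> P" using xs unfolding sat_chain_def by (metis last_in_set subsetD)
  obtain zs where zs: "sat_chain P leq zs" "hd zs = z" "maximal_in P leq (last zs)"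
    using chain_up[OF po zP] by blast
  have nx: "xs \<noteq> []" and ny: "ys \<noteq> []" and nz: "zs \<noteq> []" using xs ys zs unfolding sat_chain_def by auto
  note ax = chain_append[OF nx nz _ xs(1) zs(1), of \<omega>]
  note ay = chain_append[OF ny nz _ ys(1) zs(1), of \<omega>]
  have "max_chain P leq (xs @ tl zs)" using ax xs zs unfolding max_chain_def by simp
  then have "chain_weight \<omega> (xs @ tl zs) = r" using sg unfolding sign_graded_def by blast
  moreover have "max_chain P leq (ys @ tl zs)" using ay ys zs unfolding max_chain_def by simp
  then have "chain_weight \<omega> (ys @ tl zs) = r" using sg unfolding sign_graded_def by blast
  ultimately show ?thesis using ax ay xs ys zs by simp
qed

lemma rho_eq:
  assumes po: "poset_on P leq" and sg: "sign_graded P leq \<omega> r"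
    and xs: "sat_chain P leq xs" "minimal_in P leq (hd xs)" "last xs = z"
  shows "rho P leq \<omega> z = chain_weight \<omega> xs"
proof -
  let ?Q = "\<lambda>xs. sat_chain P leq xs \<and> minimal_in P leq (hd xs) \<and> last xs = z"
  have "?Q (SOME xs. ?Q xs)" using someI[of ?Q xs] xs by blast
  then show ?thesis unfolding rho_def using rho_wd[OF po sg] xs by blast
qed

lemma rho_min:
  assumes po: "poset_on P leq" and sg: "sign_graded P leq \<omega> r" and m: "minimal_in P leq z"
  shows "rho P leq \<omega> z = 0"
proof -
  have "sat_chain P leq [z]" using m by (simp add: sat_chain_def minimal_in_def)
  then show ?thesis using rho_eq[OF po sg, of "[z]" z] m by (simp add: chain_weight_def)
qed

lemma rho_max:
  assumes po: "poset_on P leq" and sg: "sign_graded P leq \<omega> r" and m: "maximal_in P leq z"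
  shows "rho P leq \<omega> z = r"
proof -
  have zP: "z \<in> P" using m unfolding maximal_in_def by simp
  obtain xs where xs: "sat_chain P leq xs" "minimal_in P leq (hd xs)" "last xs = z"
    using chain_down[OF po zP] by blast
  then have "max_chain P leq xs" using m unfolding max_chain_def by simp
  then have "chain_weight \<omega> xs = r" using sg unfolding sign_graded_def by blast
  then show ?thesis using rho_eq[OF po sg xs] by simp
qed

lemma rho_cover:
  assumes po: "poset_on P leq" and sg: "sign_graded P leq \<omega> r" and c: "covers P leq x y"
  shows "rho P leq \<omega> y = rho P leq \<omega> x + eps \<omega> x y"
proof -
  have xP: "x \<in> P" and yP: "y \<in> P" using c unfolding covers_def by auto
  obtain xs where xs: "sat_chain P leq xs" "minimal_in P leq (hd xs)" "last xs = x"
    using chain_down[OF po xP] by blast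
  have sc2: "sat_chain P leq [x, y]" using c yP by (simp add: sat_chain_Cons)
  have nx: "xs \<noteq> []" using xs unfolding sat_chain_def by simp
  note a = chain_append[OF nx _ _ xs(1) sc2, of \<omega>]
  have "rho P leq \<omega> y = chain_weight \<omega> (xs @ tl [x, y])"
    using rho_eq[OF po sg, of "xs @ tl [x, y]" y] a xs by simp
  also have "\<dots> = chain_weight \<omega> xs + chain_weight \<omega> [x, y]" using a xs by simp
  also have "\<dots> = rho P leq \<omega> x + eps \<omega> x y" using rho_eq[OF po sg xs] by (simp add: chain_weight_Cons)
  finally show ?thesis .
qed

lemma sum_indicator_card: "finite A \<Longrightarrow> (\<Sum>x\<in>A. if P x then 1 else 0 :: int) = int (card {x\<in>A. P x})"
  by (simp add: sum.inter_filter[symmetric])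

lemma le_append:
  "linear_extension Q leq (xs @ ys) \<longleftrightarrow> distinct (xs @ ys) \<and> set xs \<union> set ys = Q
     \<and> linear_extension (set xs) leq xs \<and> linear_extension (set ys) leq ys
     \<and> (\<forall>x\<in>set xs. \<forall>y\<in>set ys. \<not> less_in leq y x)"
proof
  assume H: "linear_extension Q leq (xs @ ys)"
  then have d: "distinct (xs @ ys)" and s: "set xs \<union> set ys = Q"
    and o: "\<And>i j. i < j \<Longrightarrow> j < length (xs @ ys) \<Longrightarrow> \<not> less_in leq ((xs @ ys) ! j) ((xs @ ys) ! i)"
    unfolding linear_extension_def by auto
  have "linear_extension (set xs) leq xs"
    unfolding linear_extension_def
  proof (intro conjI allI impI)
    fix i j assume "i < j \<and> j < length xs"
    then show "\<not> less_in leq (xs ! j) (xs ! i)" using o[of i j] by (simp add: nth_append)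
  qed (use d in auto)
  moreover have "linear_extension (set ys) leq ys"
    unfolding linear_extension_def
  proof (intro conjI allI impI)
    fix i j assume "i < j \<and> j < length ys"
    then show "\<not> less_in leq (ys ! j) (ys ! i)" using o[of "length xs + i" "length xs + j"] by (simp add: nth_append)
  qed (use d in auto)
  moreover have "\<forall>x\<in>set xs. \<forall>y\<in>set ys. \<not> less_in leq y x"
  proof (intro ballI)
    fix x y assume "x \<in> set xs" "y \<in> set ys"
    then obtain i j where i: "i < length xs" "x = xs ! i" and j: "j < length ys" "y = ys ! j"
      by (auto simp: in_set_conv_nth)
    then show "\<not> less_in leq y x" using o[of i "length xs + j"] by (simp add: nth_append)
  qed
  ultimately show "distinct (xs @ ys) \<and> set xs \<union> set ys = Q
     \<and> linear_extension (set xs) leq xs \<and> linear_extension (set ys) leq ys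
     \<and> (\<forall>x\<in>set xs. \<forall>y\<in>set ys. \<not> less_in leq y x)" using d s by simp
next
  assume H: "distinct (xs @ ys) \<and> set xs \<union> set ys = Q
     \<and> linear_extension (set xs) leq xs \<and> linear_extension (set ys) leq ys
     \<and> (\<forall>x\<in>set xs. \<forall>y\<in>set ys. \<not> less_in leq y x)"
  then have ox: "\<And>i j. i < j \<Longrightarrow> j < length xs \<Longrightarrow> \<not> less_in leq (xs ! j) (xs ! i)"
    and oy: "\<And>i j. i < j \<Longrightarrow> j < length ys \<Longrightarrow> \<not> less_in leq (ys ! j) (ys ! i)"
    and cr: "\<forall>x\<in>set xs. \<forall>y\<in>set ys. \<not> less_in leq y x"
    unfolding linear_extension_def by auto
  show "linear_extension Q leq (xs @ ys)"
    unfolding linear_extension_def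
  proof (intro conjI allI impI)
    fix i j assume ij: "i < j \<and> j < length (xs @ ys)"
    show "\<not> less_in leq ((xs @ ys) ! j) ((xs @ ys) ! i)"
    proof (cases "j < length xs")
      case True
      then show ?thesis using ox[of i j] ij by (simp add: nth_append)
    next
      case False
      show ?thesis
      proof (cases "i < length xs")
        case True
        have "(xs @ ys) ! i \<in> set xs" using True by (simp add: nth_append)
        moreover have "(xs @ ys) ! j \<in> set ys" using False ij by (auto simp: nth_append intro!: nth_mem)
        ultimately show ?thesis using cr by blast
      next
        case F2: False
        have "i - length xs < j - length xs" "j - length xs < length ys" using F2 ij by auto
        then show ?thesis using oy[of "i - length xs" "j - length xs"] F2 False by (simp add: nth_append)
      qed
    qed
  qed (use H in auto)
qed

lemma lin_ext_perms: "linear_extension Q leq \<pi> \<Longrightarrow> \<pi> \<in> perms Q"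
  unfolding linear_extension_def perms_def by simp

lemma finite_lin_ext: "finite Q \<Longrightarrow> finite {\<pi>. linear_extension Q leq \<pi>}"
  using perms_finite[of Q] lin_ext_perms[of Q leq] by (metis (mono_tags, lifting) finite_subset mem_Collect_eq subsetI)

lemma lin_ext_last_max:
  assumes le: "linear_extension Q leq \<pi>" and ne: "\<pi> \<noteq> []"
  shows "maximal_in Q leq (last \<pi>)"
proof -
  define n where "n = length \<pi> - 1"
  have ln: "last \<pi> = \<pi> ! n" using ne by (simp add: last_conv_nth n_def)
  have nl: "n < length \<pi>" using ne by (simp add: n_def)
  have lQ: "last \<pi> \<in> Q" using le ne unfolding linear_extension_def by auto
  have "\<not> less_in leq (last \<pi>) y" if "y \<in> Q" for y
  proof
    assume l: "less_in leq (last \<pi>) y"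
    have "y \<in> set \<pi>" using that le unfolding linear_extension_def by simp
    then obtain j where j: "j < length \<pi>" "y = \<pi> ! j" by (auto simp: in_set_conv_nth)
    have "y \<noteq> last \<pi>" using l unfolding less_in_def by auto
    then have "j \<noteq> n" using j ln by auto
    then have "j < n" using j n_def by simp
    moreover have o: "\<forall>i j. i < j \<and> j < length \<pi> \<longrightarrow> \<not> less_in leq (\<pi> ! j) (\<pi> ! i)"
      using le unfolding linear_extension_def by simp
    ultimately have "\<not> less_in leq (\<pi> ! n) (\<pi> ! j)" using nl by blast
    then show False using l j ln by simp
  qed
  then show ?thesis using lQ unfolding maximal_in_def by blast
qed

locale cposet =
  fixes P :: "'a set" and leq :: "'a \<Rightarrow> 'a \<Rightarrow> bool" and \<omega> :: "'a \<Rightarrow> nat" and g :: "'a \<Rightarrow> int"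
  assumes po: "poset_on P leq"
    and inj: "inj_on \<omega> P"
    and g01: "\<forall>x\<in>P. g x \<in> {0, 1}"
    and gmono: "\<forall>x\<in>P. \<forall>y\<in>P. g x < g y \<longrightarrow> \<omega> x < \<omega> y"
    and gcov: "\<forall>x y. covers P leq x y \<longrightarrow> g x \<noteq> g y"
    and gmin: "\<forall>x. minimal_in P leq x \<longrightarrow> g x = 0"
begin

definition downset :: "'a set \<Rightarrow> bool" where
  "downset Q \<longleftrightarrow> Q \<subseteq> P \<and> (\<forall>x\<in>Q. \<forall>y\<in>P. less_in leq y x \<longrightarrow> y \<in> Q)"

definition Lq :: "'a set \<Rightarrow> int \<Rightarrow> 'a list set" where
  "Lq Q c0 = {\<pi>. linear_extension Q leq \<pi> \<and> \<pi> \<noteq> [] \<and> g (last \<pi>) = c0}"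

definition Lq' :: "'a set \<Rightarrow> int \<Rightarrow> 'a list set" where
  "Lq' Q c0 = {\<pi>. linear_extension Q leq \<pi> \<and> (\<pi> = [] \<or> g (last \<pi>) = c0)}"

definition good :: "'a list \<Rightarrow> bool" where
  "good \<pi> \<longleftrightarrow> altr 0 (map \<omega> \<pi>) \<and> compo g \<pi>"

definition Bs :: "'a set \<Rightarrow> int \<Rightarrow> 'a set set" where
  "Bs Q c0 = {B. B \<subseteq> Q \<and> B \<noteq> {} \<and> (\<forall>x\<in>B. g x = c0) \<and> (\<forall>x\<in>B. \<forall>y\<in>Q. less_in leq x y \<longrightarrow> y \<in> B)}"

lemma finP: "finite P" using po unfolding poset_on_def by simp

lemma downset_finite: "downset Q \<Longrightarrow> finite Q"
  unfolding downset_def using finP finite_subset by blast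

lemma antichain:
  assumes Q: "downset Q" and B: "B \<in> Bs Q c0" and x: "x \<in> B" and y: "y \<in> B"
  shows "\<not> less_in leq x y"
proof
  assume xy: "less_in leq x y"
  have BQ: "B \<subseteq> Q" and QP: "Q \<subseteq> P" using B Q unfolding Bs_def downset_def by auto
  have xP: "x \<in> P" and yP: "y \<in> P" using x y BQ QP by auto
  define T where "T = {z\<in>P. less_in leq x z \<and> leq z y}"
  have "y \<in> T" using xy yP po unfolding T_def poset_on_def by auto
  then have "T \<noteq> {}" "finite T" "T \<subseteq> P" using finP unfolding T_def by auto
  then obtain z0 where z0: "z0 \<in> T" "\<forall>b\<in>T. \<not> less_in leq b z0" using ex_min_rel[OF po] by blast
  have z0P: "z0 \<in> P" and xz0: "less_in leq x z0" and z0y: "leq z0 y" using z0 unfolding T_def by auto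
  have cov: "covers P leq x z0"
    unfolding covers_def
  proof (intro conjI)
    show "\<not> (\<exists>w\<in>P. less_in leq x w \<and> less_in leq w z0)"
    proof
      assume "\<exists>w\<in>P. less_in leq x w \<and> less_in leq w z0"
      then obtain w where w: "w \<in> P" "less_in leq x w" "less_in leq w z0" by blast
      have "leq w y" using w z0P yP z0y po unfolding poset_on_def less_in_def by blast
      then have "w \<in> T" using w unfolding T_def by simp
      then show False using z0 w by blast
    qed
  qed (use xP z0P xz0 in auto)
  have "z0 \<in> Q"
  proof (cases "z0 = y")
    case True
    then show ?thesis using y BQ by auto
  next
    case False
    then have "less_in leq z0 y" using z0y unfolding less_in_def by simp
    then show ?thesis using Q y BQ z0P unfolding downset_def by blast
  qed
  then have "z0 \<in> B" using B x xz0 unfolding Bs_def by blast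
  then have "g z0 = g x" using B x unfolding Bs_def by auto
  moreover have "g x \<noteq> g z0" using gcov cov by blast
  ultimately show False by simp
qed

lemma downset_diff:
  assumes Q: "downset Q" and B: "B \<in> Bs Q c0"
  shows "downset (Q - B)"
  unfolding downset_def
proof (intro conjI ballI impI)
  show "Q - B \<subseteq> P" using Q unfolding downset_def by auto
  fix x y assume x: "x \<in> Q - B" and y: "y \<in> P" and yx: "less_in leq y x"
  have "y \<in> Q" using Q x y yx unfolding downset_def by auto
  moreover have "y \<notin> B"
  proof
    assume "y \<in> B"
    then have "x \<in> B" using B x yx unfolding Bs_def by auto
    then show False using x by simp
  qed
  ultimately show "y \<in> Q - B" by simp
qed

lemma Lq'_empty: "Lq' {} c = {[]}"
  unfolding Lq'_def linear_extension_def by auto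

lemma Lq'_ne: "Q \<noteq> {} \<Longrightarrow> Lq' Q c = Lq Q c"
  unfolding Lq'_def Lq_def linear_extension_def by auto

lemma suffix_unique:
  assumes col: "\<forall>x\<in>set \<sigma>. g x = c0" and bd: "\<pi> = [] \<or> g (last \<pi>) \<noteq> c0"
  shows "rev (takeWhile (\<lambda>x. g x = c0) (rev (\<pi> @ \<sigma>))) = \<sigma>"
    and "rev (dropWhile (\<lambda>x. g x = c0) (rev (\<pi> @ \<sigma>))) = \<pi>"
proof -
  have t: "takeWhile (\<lambda>x. g x = c0) (rev \<pi>) = []" and d: "dropWhile (\<lambda>x. g x = c0) (rev \<pi>) = rev \<pi>"
    using bd by (cases "rev \<pi>"; auto simp: hd_rev[symmetric])+
  have "takeWhile (\<lambda>x. g x = c0) (rev \<sigma> @ rev \<pi>) = rev \<sigma> @ takeWhile (\<lambda>x. g x = c0) (rev \<pi>)"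
    by (rule takeWhile_append2) (use col in auto)
  then show "rev (takeWhile (\<lambda>x. g x = c0) (rev (\<pi> @ \<sigma>))) = \<sigma>" using t by simp
  have "dropWhile (\<lambda>x. g x = c0) (rev \<sigma> @ rev \<pi>) = dropWhile (\<lambda>x. g x = c0) (rev \<pi>)"
    by (rule dropWhile_append2) (use col in auto)
  then show "rev (dropWhile (\<lambda>x. g x = c0) (rev (\<pi> @ \<sigma>))) = \<pi>" using d by simp
qed

lemma Bs_finite: "downset Q \<Longrightarrow> finite (Bs Q c0)"
proof -
  assume "downset Q"
  then have "finite (Pow Q)" using downset_finite by simp
  moreover have "Bs Q c0 \<subseteq> Pow Q" unfolding Bs_def by auto
  ultimately show ?thesis using finite_subset by blast
qed

lemma Lq'_finite: "finite Q \<Longrightarrow> finite (Lq' Q c)"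
proof -
  assume "finite Q"
  then have "finite {\<pi>. linear_extension Q leq \<pi>}" by (rule finite_lin_ext)
  moreover have "Lq' Q c \<subseteq> {\<pi>. linear_extension Q leq \<pi>}" unfolding Lq'_def by auto
  ultimately show ?thesis using finite_subset by blast
qed

lemma Lq_finite: "finite Q \<Longrightarrow> finite (Lq Q c)"
proof -
  assume "finite Q"
  then have "finite {\<pi>. linear_extension Q leq \<pi>}" by (rule finite_lin_ext)
  moreover have "Lq Q c \<subseteq> {\<pi>. linear_extension Q leq \<pi>}" unfolding Lq_def by auto
  ultimately show ?thesis using finite_subset by blast
qed

lemma decomp:
  assumes Q: "downset Q" and c0: "c0 \<in> {0, 1}"
  shows "(\<Sum>\<pi>\<in>Lq Q c0. F \<pi>) = (\<Sum>B\<in>Bs Q c0. \<Sum>\<pi>'\<in>Lq' (Q - B) (1 - c0). \<Sum>\<sigma>\<in>perms B. F (\<pi>' @ \<sigma>))"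
proof -
  define S where "S = (SIGMA B:Bs Q c0. Lq' (Q - B) (1 - c0) \<times> perms B)"
  define h where "h = (\<lambda>q :: 'a set \<times> 'a list \<times> 'a list. fst (snd q) @ snd (snd q))"
  have finQ: "finite Q" using Q downset_finite by simp
  have finB: "finite (Bs Q c0)" using Bs_finite[OF Q] .
  have finI: "\<forall>B\<in>Bs Q c0. finite (Lq' (Q - B) (1 - c0) \<times> perms B)"
  proof
    fix B assume "B \<in> Bs Q c0"
    then have "B \<subseteq> Q" unfolding Bs_def by simp
    then have "finite B" using finQ finite_subset by blast
    then show "finite (Lq' (Q - B) (1 - c0) \<times> perms B)" using finQ by (simp add: Lq'_finite perms_finite)
  qed
  have QP: "Q \<subseteq> P" using Q unfolding downset_def by simp
  have gc: "g x = 1 - c0" if "x \<in> P" "g x \<noteq> c0" for x using that g01 c0 by auto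
  have mem: "\<forall>x\<in>set \<sigma>. g x = c0" "\<pi>' = [] \<or> g (last \<pi>') \<noteq> c0" "\<sigma> \<noteq> []" "set \<sigma> = B"
    if "(B, \<pi>', \<sigma>) \<in> S" for B \<pi>' \<sigma>
  proof -
    have B: "B \<in> Bs Q c0" and p: "\<pi>' \<in> Lq' (Q - B) (1 - c0)" and s: "\<sigma> \<in> perms B" using that unfolding S_def by auto
    show "\<forall>x\<in>set \<sigma>. g x = c0" "set \<sigma> = B" "\<sigma> \<noteq> []" using B s unfolding Bs_def perms_def by auto
    have "\<pi>' = [] \<or> g (last \<pi>') = 1 - c0" using p unfolding Lq'_def by auto
    moreover have "1 - c0 \<noteq> c0" by presburger
    ultimately show "\<pi>' = [] \<or> g (last \<pi>') \<noteq> c0" by auto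
  qed
  have "(\<Sum>B\<in>Bs Q c0. \<Sum>\<pi>'\<in>Lq' (Q - B) (1 - c0). \<Sum>\<sigma>\<in>perms B. F (\<pi>' @ \<sigma>))
      = (\<Sum>B\<in>Bs Q c0. \<Sum>p\<in>Lq' (Q - B) (1 - c0) \<times> perms B. F (fst p @ snd p))"
    by (simp add: sum.cartesian_product split_def)
  also have "\<dots> = (\<Sum>q\<in>S. F (h q))"
    unfolding S_def h_def by (subst sum.Sigma[OF finB finI]) (simp add: split_def)
  also have "\<dots> = (\<Sum>\<pi>\<in>Lq Q c0. F \<pi>)"
  proof (rule sum.reindex_bij_betw)
    show "bij_betw h S (Lq Q c0)"
      unfolding bij_betw_def
    proof
      show "inj_on h S"
      proof (rule inj_onI)
        fix q q' assume q: "q \<in> S" and q': "q' \<in> S" and eq: "h q = h q'"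
        obtain B \<pi>' \<sigma> where qd: "q = (B, \<pi>', \<sigma>)" by (cases q) auto
        obtain B2 \<pi>2 \<sigma>2 where qd': "q' = (B2, \<pi>2, \<sigma>2)" by (cases q') auto
        note m1 = mem[of B \<pi>' \<sigma>] and m2 = mem[of B2 \<pi>2 \<sigma>2]
        have e: "\<pi>' @ \<sigma> = \<pi>2 @ \<sigma>2" using eq qd qd' h_def by simp
        have "\<sigma> = \<sigma>2" using suffix_unique(1)[of \<sigma> c0 \<pi>'] suffix_unique(1)[of \<sigma>2 c0 \<pi>2] m1 m2 q q' qd qd' e by metis
        moreover have "\<pi>' = \<pi>2" using suffix_unique(2)[of \<sigma> c0 \<pi>'] suffix_unique(2)[of \<sigma>2 c0 \<pi>2] m1 m2 q q' qd qd' e by metis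
        moreover have "B = B2" using m1 m2 q q' qd qd' \<open>\<sigma> = \<sigma>2\<close> by metis
        ultimately show "q = q'" using qd qd' by simp
      qed
      show "h ` S = Lq Q c0"
      proof
        show "h ` S \<subseteq> Lq Q c0"
        proof
          fix x assume "x \<in> h ` S"
          then obtain B \<pi>' \<sigma> where q: "(B, \<pi>', \<sigma>) \<in> S" and x: "x = \<pi>' @ \<sigma>" unfolding h_def by auto
          have B: "B \<in> Bs Q c0" and p: "\<pi>' \<in> Lq' (Q - B) (1 - c0)" and s: "\<sigma> \<in> perms B" using q unfolding S_def by auto
          have BQ: "B \<subseteq> Q" using B unfolding Bs_def by simp
          have lp: "linear_extension (Q - B) leq \<pi>'" using p unfolding Lq'_def by simp
          then have sp: "set \<pi>' = Q - B" "distinct \<pi>'" unfolding linear_extension_def by auto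
          have ss: "set \<sigma> = B" "distinct \<sigma>" using s unfolding perms_def by auto
          have ls: "linear_extension (set \<sigma>) leq \<sigma>"
            unfolding linear_extension_def
          proof (intro conjI allI impI)
            fix i j assume "i < j \<and> j < length \<sigma>"
            then have "\<sigma> ! i \<in> B" "\<sigma> ! j \<in> B" using ss by auto
            then show "\<not> less_in leq (\<sigma> ! j) (\<sigma> ! i)" using antichain[OF Q B] by blast
          qed (use ss in auto)
          have cr: "\<forall>a\<in>set \<pi>'. \<forall>b\<in>set \<sigma>. \<not> less_in leq b a"
          proof (intro ballI notI)
            fix a b assume a: "a \<in> set \<pi>'" and b: "b \<in> set \<sigma>" and ba: "less_in leq b a"
            have "a \<in> B" using B b ba a sp ss unfolding Bs_def by auto
            then show False using a sp by simp
          qed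
          have "linear_extension Q leq (\<pi>' @ \<sigma>)"
            unfolding le_append using sp ss lp ls cr BQ by auto
          moreover have "\<sigma> \<noteq> []" "g (last \<sigma>) = c0" using mem[OF q] by auto
          ultimately show "x \<in> Lq Q c0" unfolding Lq_def x by simp
        qed
        show "Lq Q c0 \<subseteq> h ` S"
        proof
          fix \<pi> assume pi: "\<pi> \<in> Lq Q c0"
          define P0 where "P0 = (\<lambda>x. g x = c0)"
          define \<sigma> where "\<sigma> = rev (takeWhile P0 (rev \<pi>))"
          define \<pi>' where "\<pi>' = rev (dropWhile P0 (rev \<pi>))"
          have split: "\<pi> = \<pi>' @ \<sigma>"
          proof -
            have "rev \<pi> = takeWhile P0 (rev \<pi>) @ dropWhile P0 (rev \<pi>)" by simp
            then have "rev (rev \<pi>) = rev (dropWhile P0 (rev \<pi>)) @ rev (takeWhile P0 (rev \<pi>))" by (metis rev_append)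
            then show ?thesis unfolding \<sigma>_def \<pi>'_def by simp
          qed
          have le: "linear_extension Q leq \<pi>" and ne: "\<pi> \<noteq> []" and gl: "g (last \<pi>) = c0" using pi unfolding Lq_def by auto
          have sne: "\<sigma> \<noteq> []"
          proof -
            obtain y ys where r: "rev \<pi> = y # ys" using ne by (cases "rev \<pi>") auto
            have "y = last \<pi>" using r by (metis hd_rev list.sel(1))
            then have "takeWhile P0 (y # ys) \<noteq> []" using gl unfolding P0_def by simp
            then show ?thesis unfolding \<sigma>_def r by simp
          qed
          have scol: "\<forall>x\<in>set \<sigma>. g x = c0" unfolding \<sigma>_def P0_def by (auto dest: set_takeWhileD)
          have pbd: "\<pi>' = [] \<or> g (last \<pi>') \<noteq> c0"
          proof (cases "\<pi>' = []")
            case False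
            then have "dropWhile P0 (rev \<pi>) \<noteq> []" unfolding \<pi>'_def by simp
            then have "\<not> P0 (hd (dropWhile P0 (rev \<pi>)))" by (rule hd_dropWhile)
            moreover have "last \<pi>' = hd (dropWhile P0 (rev \<pi>))" unfolding \<pi>'_def
              using \<open>dropWhile P0 (rev \<pi>) \<noteq> []\<close> by (simp add: last_rev)
            ultimately show ?thesis unfolding P0_def by simp
          qed simp
          have L: "distinct (\<pi>' @ \<sigma>) \<and> set \<pi>' \<union> set \<sigma> = Q \<and> linear_extension (set \<pi>') leq \<pi>'
             \<and> linear_extension (set \<sigma>) leq \<sigma> \<and> (\<forall>x\<in>set \<pi>'. \<forall>y\<in>set \<sigma>. \<not> less_in leq y x)"
            using le split le_append by metis
          define B where "B = set \<sigma>"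
          have BBs: "B \<in> Bs Q c0"
            unfolding Bs_def
          proof (intro CollectI conjI ballI impI)
            show "B \<subseteq> Q" using L B_def by auto
            show "B \<noteq> {}" using sne B_def by simp
            fix x assume x: "x \<in> B"
            then show "g x = c0" using scol B_def by simp
            fix y assume y: "y \<in> Q" and xy: "less_in leq x y"
            show "y \<in> B"
            proof (rule ccontr)
              assume "y \<notin> B"
              then have "y \<in> set \<pi>'" using y L B_def by auto
              then show False using L x xy B_def by blast
            qed
          qed
          have sp': "set \<pi>' = Q - B" using L B_def by auto
          have "\<pi>' \<in> Lq' (Q - B) (1 - c0)"
          proof -
            have "linear_extension (Q - B) leq \<pi>'" using L sp' by simp
            moreover have "\<pi>' = [] \<or> g (last \<pi>') = 1 - c0"
            proof (cases "\<pi>' = []")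
              case False
              then have "last \<pi>' \<in> P" using sp' QP by auto
              then show ?thesis using gc pbd False by blast
            qed simp
            ultimately show ?thesis unfolding Lq'_def by simp
          qed
          moreover have "\<sigma> \<in> perms B" using L B_def unfolding perms_def by simp
          ultimately have "(B, \<pi>', \<sigma>) \<in> S" using BBs unfolding S_def by simp
          moreover have "h (B, \<pi>', \<sigma>) = \<pi>" using split h_def by simp
          ultimately show "\<pi> \<in> h ` S" by (metis image_eqI)
        qed
      qed
    qed
  qed
  finally show ?thesis by simp
qed

end

context cposet
begin

definition Ssum :: "'a set \<Rightarrow> int \<Rightarrow> int" where
  "Ssum Q c0 = (\<Sum>\<pi>\<in>Lq Q c0. (-1) ^ desr (map \<omega> \<pi>))"
definition Gsum :: "'a set \<Rightarrow> int \<Rightarrow> int" where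
  "Gsum Q c0 = (\<Sum>\<pi>\<in>Lq Q c0. (if good \<pi> then 1 else 0))"
definition Ssum' :: "'a set \<Rightarrow> int \<Rightarrow> int" where
  "Ssum' Q c0 = (\<Sum>\<pi>\<in>Lq' Q c0. (-1) ^ desr (map \<omega> \<pi>))"
definition Gsum' :: "'a set \<Rightarrow> int \<Rightarrow> int" where
  "Gsum' Q c0 = (\<Sum>\<pi>\<in>Lq' Q c0. (if good \<pi> then 1 else 0))"

lemma Ssum'_eq: "Ssum' Q c = (if Q = {} then 1 else Ssum Q c)"
  unfolding Ssum'_def Ssum_def using Lq'_empty Lq'_ne by auto

lemma Gsum'_eq: "Gsum' Q c = (if Q = {} then 1 else Gsum Q c)"
proof -
  have "good []" unfolding good_def compo_def by simp
  then show ?thesis unfolding Gsum'_def Gsum_def using Lq'_empty Lq'_ne by auto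
qed

lemma min_color:
  assumes Q: "downset Q" and ne: "Q \<noteq> {}"
  shows "\<exists>x\<in>Q. g x = 0"
proof -
  have QP: "Q \<subseteq> P" using Q unfolding downset_def by simp
  obtain x where x: "x \<in> Q" "\<forall>b\<in>Q. \<not> less_in leq b x"
    using ex_min_rel[OF po downset_finite[OF Q] ne QP] by blast
  have "minimal_in P leq x"
    unfolding minimal_in_def
  proof (intro conjI notI)
    show "x \<in> P" using x QP by auto
    assume "\<exists>y\<in>P. less_in leq y x"
    then obtain y where "y \<in> P" "less_in leq y x" by blast
    then have "y \<in> Q" using Q x unfolding downset_def by blast
    then show False using x \<open>less_in leq y x\<close> by blast
  qed
  then show ?thesis using gmin x by blast
qed

lemma bdry:
  assumes Q: "downset Q" and c0: "c0 \<in> {0, 1}" and B: "B \<in> Bs Q c0"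
    and p: "\<pi>' \<in> Lq' (Q - B) (1 - c0)" and s: "\<sigma> \<in> perms B" and pne: "\<pi>' \<noteq> []"
  shows "(\<omega> (last \<pi>') > \<omega> (hd \<sigma>)) = (c0 = 0)" and "(\<omega> (last \<pi>') < \<omega> (hd \<sigma>)) = (c0 = 1)"
proof -
  have QP: "Q \<subseteq> P" using Q unfolding downset_def by simp
  have lp: "last \<pi>' \<in> Q - B" "g (last \<pi>') = 1 - c0" using p pne unfolding Lq'_def linear_extension_def by auto
  have sne: "\<sigma> \<noteq> []" using s B unfolding perms_def Bs_def by auto
  have hs: "hd \<sigma> \<in> B" "g (hd \<sigma>) = c0" using s B sne unfolding perms_def Bs_def by auto
  have P1: "last \<pi>' \<in> P" "hd \<sigma> \<in> P" using lp hs B QP unfolding Bs_def by auto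
  have ne: "\<omega> (last \<pi>') \<noteq> \<omega> (hd \<sigma>)" using inj P1 lp hs by (metis DiffD2 inj_on_def)
  show "(\<omega> (last \<pi>') > \<omega> (hd \<sigma>)) = (c0 = 0)"
  proof (cases "c0 = 0")
    case True
    then have "g (hd \<sigma>) < g (last \<pi>')" using lp hs by simp
    then show ?thesis using gmono P1 True by blast
  next
    case False
    then have "c0 = 1" using c0 by simp
    then have "g (last \<pi>') < g (hd \<sigma>)" using lp hs by simp
    then have "\<omega> (last \<pi>') < \<omega> (hd \<sigma>)" using gmono P1 by blast
    then show ?thesis using False by simp
  qed
  then show "(\<omega> (last \<pi>') < \<omega> (hd \<sigma>)) = (c0 = 1)" using ne c0 by auto
qed

lemma TS:
  assumes Q: "downset Q" and c0: "c0 \<in> {0, 1}" and B: "B \<in> Bs Q c0"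
  shows "(\<Sum>\<pi>'\<in>Lq' (Q - B) (1 - c0). \<Sum>\<sigma>\<in>perms B. (-1::int) ^ desr (map \<omega> (\<pi>' @ \<sigma>)))
       = Ssum' (Q - B) (1 - c0) * ((if Q - B \<noteq> {} \<and> c0 = 0 then -1 else 1) * Asum \<omega> B)"
proof -
  have "(\<Sum>\<pi>'\<in>Lq' (Q - B) (1 - c0). \<Sum>\<sigma>\<in>perms B. (-1::int) ^ desr (map \<omega> (\<pi>' @ \<sigma>)))
     = (\<Sum>\<pi>'\<in>Lq' (Q - B) (1 - c0). \<Sum>\<sigma>\<in>perms B. (-1) ^ desr (map \<omega> \<pi>') * ((-1) ^ desr (map \<omega> \<sigma>) * (if Q - B \<noteq> {} \<and> c0 = 0 then -1 else 1)))"
  proof (intro sum.cong refl)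
    fix \<pi>' \<sigma> assume p: "\<pi>' \<in> Lq' (Q - B) (1 - c0)" and s: "\<sigma> \<in> perms B"
    have sne: "\<sigma> \<noteq> []" using s B unfolding perms_def Bs_def by auto
    have sp: "set \<pi>' = Q - B" using p unfolding Lq'_def linear_extension_def by auto
    then have pe: "(\<pi>' = []) = (Q - B = {})" by (metis set_empty)
    have "desr (map \<omega> (\<pi>' @ \<sigma>)) = desr (map \<omega> \<pi>') + desr (map \<omega> \<sigma>) + (if Q - B \<noteq> {} \<and> c0 = 0 then 1 else 0)"
    proof (cases "\<pi>' = []")
      case True
      then show ?thesis using pe by simp
    next
      case False
      then show ?thesis using bdry(1)[OF Q c0 B p s False] pe sne
        by (simp add: desr_append last_map hd_map)
    qed
    then show "(-1::int) ^ desr (map \<omega> (\<pi>' @ \<sigma>)) = (-1) ^ desr (map \<omega> \<pi>') * ((-1) ^ desr (map \<omega> \<sigma>) * (if Q - B \<noteq> {} \<and> c0 = 0 then -1 else 1))"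
      by (simp add: power_add)
  qed
  also have "\<dots> = Ssum' (Q - B) (1 - c0) * ((if Q - B \<noteq> {} \<and> c0 = 0 then -1 else 1) * Asum \<omega> B)"
    unfolding Ssum'_def Asum_def by (subst sum_sum_prod) (simp add: mult.commute)
  finally show ?thesis .
qed

lemma TG:
  assumes Q: "downset Q" and c0: "c0 \<in> {0, 1}" and B: "B \<in> Bs Q c0"
  shows "(\<Sum>\<pi>'\<in>Lq' (Q - B) (1 - c0). \<Sum>\<sigma>\<in>perms B. (if good (\<pi>' @ \<sigma>) then 1 else 0::int))
       = (if (Q - B = {} \<or> (even (card (Q - B) - 1) = (c0 = 1))) \<and> odd (card B) then 1 else 0)
         * (Gsum' (Q - B) (1 - c0) * Rsum \<omega> (card (Q - B)) B)"
proof -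
  define bd where "bd = ((Q - B = {} \<or> (even (card (Q - B) - 1) = (c0 = 1))) \<and> odd (card B))"
  have "(\<Sum>\<pi>'\<in>Lq' (Q - B) (1 - c0). \<Sum>\<sigma>\<in>perms B. (if good (\<pi>' @ \<sigma>) then 1 else 0::int))
     = (\<Sum>\<pi>'\<in>Lq' (Q - B) (1 - c0). \<Sum>\<sigma>\<in>perms B. (if bd then 1 else 0) * ((if good \<pi>' then 1 else 0) * (if altr (card (Q - B)) (map \<omega> \<sigma>) then 1 else 0)))"
  proof (intro sum.cong refl)
    fix \<pi>' \<sigma> assume p: "\<pi>' \<in> Lq' (Q - B) (1 - c0)" and s: "\<sigma> \<in> perms B"
    have sne: "\<sigma> \<noteq> []" using s B unfolding perms_def Bs_def by auto
    have sp: "set \<pi>' = Q - B" using p unfolding Lq'_def linear_extension_def by auto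
    then have pe: "(\<pi>' = []) = (Q - B = {})" by (metis set_empty)
    have lp: "length \<pi>' = card (Q - B)" using p unfolding Lq'_def linear_extension_def by (auto simp: distinct_card[symmetric])
    have ls: "length \<sigma> = card B" using s unfolding perms_def by (auto simp: distinct_card[symmetric])
    have col: "\<forall>x\<in>set \<sigma>. g x = c0" using s B unfolding perms_def Bs_def by auto
    have pbd: "\<pi>' = [] \<or> g (last \<pi>') \<noteq> c0"
    proof -
      have "\<pi>' = [] \<or> g (last \<pi>') = 1 - c0" using p unfolding Lq'_def by auto
      moreover have "1 - c0 \<noteq> c0" by presburger
      ultimately show ?thesis by auto
    qed
    have cs: "compo g (\<pi>' @ \<sigma>) = (compo g \<pi>' \<and> odd (card B))" using compo_split[OF sne col pbd] ls by simp
    have bnd: "(\<pi>' \<noteq> [] \<longrightarrow> (if even (length \<pi>' - 1) then \<omega> (last \<pi>') < \<omega> (hd \<sigma>) else \<omega> (last \<pi>') > \<omega> (hd \<sigma>)))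
        = (Q - B = {} \<or> (even (card (Q - B) - 1) = (c0 = 1)))"
    proof (cases "\<pi>' = []")
      case True
      then show ?thesis using pe by simp
    next
      case False
      then show ?thesis using bdry[OF Q c0 B p s False] pe lp c0 by auto
    qed
    have "altr 0 (map \<omega> (\<pi>' @ \<sigma>)) = (altr 0 (map \<omega> \<pi>') \<and> altr (length \<pi>') (map \<omega> \<sigma>) \<and>
        (\<pi>' \<noteq> [] \<longrightarrow> (if even (length \<pi>' - 1) then \<omega> (last \<pi>') < \<omega> (hd \<sigma>) else \<omega> (last \<pi>') > \<omega> (hd \<sigma>))))"
      using sne by (simp add: altr_append last_map hd_map)
    then have "good (\<pi>' @ \<sigma>) = (bd \<and> good \<pi>' \<and> altr (card (Q - B)) (map \<omega> \<sigma>))"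
      unfolding good_def bd_def using cs bnd lp by auto
    then show "(if good (\<pi>' @ \<sigma>) then 1 else 0::int) = (if bd then 1 else 0) * ((if good \<pi>' then 1 else 0) * (if altr (card (Q - B)) (map \<omega> \<sigma>) then 1 else 0))"
      by simp
  qed
  also have "\<dots> = (if bd then 1 else 0) * (Gsum' (Q - B) (1 - c0) * Rsum \<omega> (card (Q - B)) B)"
    unfolding Gsum'_def Rsum_def by (rule sum_sum_prod2)
  finally show ?thesis unfolding bd_def .
qed

end

context cposet
begin

lemma main_claim:
  assumes "downset Q" "c0 \<in> {0, 1}"
  shows "(odd (int (card Q) - 1 - c0) \<longrightarrow> Ssum Q c0 = 0 \<and> Gsum Q c0 = 0) \<and>
         (even (int (card Q) - 1 - c0) \<longrightarrow> Ssum Q c0 = (-1) ^ nat ((int (card Q) - 1 - c0) div 2) * Gsum Q c0)"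
  using assms
proof (induction "card Q" arbitrary: Q c0 rule: less_induct)
  case less
  note Q = less.prems(1) and c0 = less.prems(2)
  define d where "d = int (card Q) - 1 - c0"
  define TS where "TS B = Ssum' (Q - B) (1 - c0) * ((if Q - B \<noteq> {} \<and> c0 = 0 then -1 else 1) * Asum \<omega> B)" for B
  define TG where "TG B = (if (Q - B = {} \<or> (even (card (Q - B) - 1) = (c0 = 1))) \<and> odd (card B) then 1 else 0)
         * (Gsum' (Q - B) (1 - c0) * Rsum \<omega> (card (Q - B)) B)" for B
  have finQ: "finite Q" using downset_finite[OF Q] .
  have QP: "Q \<subseteq> P" using Q unfolding downset_def by simp
  have Sdec: "Ssum Q c0 = (\<Sum>B\<in>Bs Q c0. TS B)"
    unfolding Ssum_def TS_def by (subst decomp[OF Q c0]) (intro sum.cong refl TS[OF Q c0])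
  have Gdec: "Gsum Q c0 = (\<Sum>B\<in>Bs Q c0. TG B)"
    unfolding Gsum_def TG_def by (subst decomp[OF Q c0]) (intro sum.cong refl TG[OF Q c0])
  have per: "(odd d \<longrightarrow> TS B = 0 \<and> TG B = 0) \<and> (even d \<longrightarrow> TS B = (-1) ^ nat (d div 2) * TG B)"
    if B: "B \<in> Bs Q c0" for B
  proof -
    have BQ: "B \<subseteq> Q" and Bne: "B \<noteq> {}" and Bcol: "\<forall>x\<in>B. g x = c0" using B unfolding Bs_def by auto
    have finB: "finite B" using BQ finQ finite_subset by blast
    have injB: "inj_on \<omega> B" using inj BQ QP inj_on_subset by blast
    define m where "m = card B"
    have m1: "m \<ge> 1" using finB Bne m_def by (simp add: Suc_le_eq card_gt_0_iff)
    have cQ: "card Q = card (Q - B) + m" using finQ BQ m_def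
      by (metis card_Diff_subset card_mono finite_subset le_add_diff_inverse2)
    show ?thesis
    proof (cases "Q - B = {}")
      case True
      then have QB: "Q = B" using BQ by auto
      obtain x where "x \<in> Q" "g x = 0" using min_color[OF Q] Bne QB by blast
      then have c00: "c0 = 0" using Bcol QB by auto
      have dm: "d = int m - 1" unfolding d_def using cQ True c00 by simp
      have TS1: "TS B = Asum \<omega> B" unfolding TS_def True by (simp add: Ssum'_eq)
      have TG1: "TG B = (if odd m then Rsum \<omega> 0 B else 0)" unfolding TG_def True using m_def by (simp add: Gsum'_eq)
      show ?thesis
      proof (cases "even m")
        case True
        then have "Asum \<omega> B = 0" using core0[OF finB injB] Bne m_def by simp
        moreover have "odd d" using dm True m1 by simp
        ultimately show ?thesis using TS1 TG1 True by simp
      next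
        case False
        then have A: "Asum \<omega> B = (-1) ^ ((m - 1) div 2) * Rsum \<omega> 0 B" using core_any[OF finB injB Bne] m_def by simp
        have "even d" using dm False m1 by simp
        moreover have "nat (d div 2) = (m - 1) div 2" using dm m1 by (simp add: nat_div_distrib)
        ultimately show ?thesis using TS1 TG1 A False by simp
      qed
    next
      case False
      define Q' where "Q' = Q - B"
      have Q'ne: "Q' \<noteq> {}" using False Q'_def by simp
      have Q'd: "downset Q'" using downset_diff[OF Q B] Q'_def by simp
      have c1: "1 - c0 \<in> {0, 1}" using c0 by auto
      have lt: "card Q' < card Q" using cQ m1 Q'_def by simp
      note IH = less.hyps[OF lt Q'd c1]
      define d' where "d' = int (card Q') - 1 - (1 - c0)"
      have cQ'1: "card Q' \<ge> 1" using Q'ne Q'd downset_finite by (simp add: Suc_le_eq card_gt_0_iff)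
      have dd: "d = d' + int m + 1 - 2 * c0" unfolding d_def d'_def using cQ Q'_def by simp
      have TSe: "TS B = Ssum Q' (1 - c0) * ((if c0 = 0 then -1 else 1) * Asum \<omega> B)"
        unfolding TS_def using Q'ne Q'_def by (simp add: Ssum'_eq)
      have TGe: "TG B = (if (even (card Q' - 1) = (c0 = 1)) \<and> odd m then 1 else 0) * (Gsum Q' (1 - c0) * Rsum \<omega> (card Q') B)"
        unfolding TG_def using Q'ne Q'_def m_def by (simp add: Gsum'_eq)
      show ?thesis
      proof (cases "even m")
        case True
        then have "Asum \<omega> B = 0" using core0[OF finB injB] Bne m_def by simp
        then show ?thesis using TSe TGe True by simp
      next
        case False
        obtain a where a: "m = 2 * a + 1" using False oddE by blast
        have A: "Asum \<omega> B = (-1) ^ a * Rsum \<omega> (card Q') B"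
        proof -
          have "(card B - 1) div 2 = a" using m_def a by simp
          then show ?thesis using core_any[OF finB injB Bne, of "card Q'"] m_def False by simp
        qed
        show ?thesis
        proof (cases "odd d")
          case True
          then have "odd d'" using dd a by presburger
          then have "Ssum Q' (1 - c0) = 0" "Gsum Q' (1 - c0) = 0" using IH d'_def by auto
          then show ?thesis using TSe TGe True by simp
        next
          case ev: False
          then have ev': "even d'" using dd a by presburger
          then have S': "Ssum Q' (1 - c0) = (-1) ^ nat (d' div 2) * Gsum Q' (1 - c0)" using IH d'_def by auto
          have bdt: "even (card Q' - 1) = (c0 = 1)"
          proof -
            have "even (int (card Q') + c0)" using ev' d'_def by presburger
            then show ?thesis using cQ'1 c0 by (auto simp: even_diff_nat)
          qed
          have d'0: "d' \<ge> 0" using ev' d'_def cQ'1 c0 by auto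
          have sgn: "(-1::int) ^ nat (d div 2) = (-1) ^ nat (d' div 2) * ((if c0 = 0 then -1 else 1) * (-1) ^ a)"
          proof (cases "c0 = 0")
            case True
            then have "d = d' + 2 * (int a + 1)" using dd a by simp
            then have "nat (d div 2) = nat (d' div 2) + (a + 1)" using d'0 by simp
            then show ?thesis using True by (simp add: power_add)
          next
            case False
            then have "c0 = 1" using c0 by simp
            then have "d = d' + 2 * int a" using dd a by simp
            then have "nat (d div 2) = nat (d' div 2) + a" using d'0 by simp
            then show ?thesis using False by (simp add: power_add)
          qed
          have "TS B = (-1) ^ nat (d' div 2) * Gsum Q' (1 - c0) * ((if c0 = 0 then -1 else 1) * ((-1) ^ a * Rsum \<omega> (card Q') B))"
            using TSe S' A by simp
          also have "\<dots> = ((-1) ^ nat (d' div 2) * ((if c0 = 0 then -1 else 1) * (-1) ^ a)) * (Gsum Q' (1 - c0) * Rsum \<omega> (card Q') B)"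
            by (simp only: mult_ac)
          also have "\<dots> = (-1) ^ nat (d div 2) * TG B"
            using sgn TGe bdt False m_def by simp
          finally have "TS B = (-1) ^ nat (d div 2) * TG B" .
          then show ?thesis using ev by simp
        qed
      qed
    qed
  qed
  have finBs: "finite (Bs Q c0)" using Bs_finite[OF Q] .
  show ?case
  proof (rule conjI; intro impI)
    assume "odd (int (card Q) - 1 - c0)"
    then have "odd d" using d_def by simp
    then show "Ssum Q c0 = 0 \<and> Gsum Q c0 = 0" using Sdec Gdec per by simp
  next
    assume "even (int (card Q) - 1 - c0)"
    then have "even d" using d_def by simp
    then have "Ssum Q c0 = (-1) ^ nat (d div 2) * Gsum Q c0"
      using Sdec Gdec per by (simp add: sum_distrib_left)
    then show "Ssum Q c0 = (-1) ^ nat ((int (card Q) - 1 - c0) div 2) * Gsum Q c0" using d_def by simp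
  qed
qed

end

theorem theorem5p2:
  fixes P :: "'a set" and leq :: "'a \<Rightarrow> 'a \<Rightarrow> bool" and \<omega> :: "'a \<Rightarrow> nat" and r :: int
  assumes "poset_on P leq"
    and "P \<noteq> {}"
    and "bij_betw \<omega> P {1..card P}"
    and "sign_graded P leq \<omega> r"
    and "canonical P leq \<omega>"
  shows "CD P leq \<omega> r =
    int (card {\<pi> \<in> JH P leq \<omega>. reverse_alternating \<pi>
                 \<and> components_odd (\<lambda>a. rho P leq \<omega> (the_inv_into P \<omega> a)) \<pi>})"
proof -
  note po = assms(1) and Pne = assms(2) and sg = assms(4) and can = assms(5)
  have inj: "inj_on \<omega> P" using assms(3) bij_betw_imp_inj_on by blast
  define f where "f a = rho P leq \<omega> (the_inv_into P \<omega> a)" for a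
  define g where "g x = f (\<omega> x)" for x
  have gx: "g x = rho P leq \<omega> x" if "x \<in> P" for x
    unfolding g_def f_def using the_inv_into_f_f[OF inj that] by simp
  have finP: "finite P" using po unfolding poset_on_def by simp
  interpret cposet P leq \<omega> g
  proof
    show "poset_on P leq" by (rule po)
    show "inj_on \<omega> P" by (rule inj)
    show "\<forall>x\<in>P. g x \<in> {0, 1}" using can gx unfolding canonical_def by simp
    show "\<forall>x\<in>P. \<forall>y\<in>P. g x < g y \<longrightarrow> \<omega> x < \<omega> y" using can gx unfolding canonical_def by simp
    show "\<forall>x y. covers P leq x y \<longrightarrow> g x \<noteq> g y"
    proof (intro allI impI)
      fix x y assume c: "covers P leq x y"
      then have "x \<in> P" "y \<in> P" unfolding covers_def by auto
      moreover have "rho P leq \<omega> y = rho P leq \<omega> x + eps \<omega> x y" by (rule rho_cover[OF po sg c])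
      moreover have "eps \<omega> x y \<noteq> 0" unfolding eps_def by simp
      ultimately show "g x \<noteq> g y" using gx by simp
    qed
    show "\<forall>x. minimal_in P leq x \<longrightarrow> g x = 0"
    proof (intro allI impI)
      fix x assume m: "minimal_in P leq x"
      then have "x \<in> P" unfolding minimal_in_def by simp
      then show "g x = 0" using gx rho_min[OF po sg m] by simp
    qed
  qed
  obtain z where z: "z \<in> P" "\<forall>b\<in>P. \<not> less_in leq z b" using ex_max_rel[OF po finP Pne] by blast
  then have zm: "maximal_in P leq z" unfolding maximal_in_def by blast
  have rz: "rho P leq \<omega> z = r" using rho_max[OF po sg zm] .
  have r01: "r \<in> {0, 1}" using can z rz unfolding canonical_def by auto
  define LE where "LE = {\<pi>. linear_extension P leq \<pi>}"
  have finLE: "finite LE" unfolding LE_def using finite_lin_ext[OF finP] .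
  have LqP: "Lq P r = LE"
  proof
    show "Lq P r \<subseteq> LE" unfolding Lq_def LE_def by auto
    show "LE \<subseteq> Lq P r"
    proof
      fix \<pi> assume "\<pi> \<in> LE"
      then have le: "linear_extension P leq \<pi>" unfolding LE_def by simp
      then have ne: "\<pi> \<noteq> []" using Pne unfolding linear_extension_def by auto
      have "maximal_in P leq (last \<pi>)" using lin_ext_last_max[OF le ne] .
      then have "g (last \<pi>) = r" using rho_max[OF po sg] gx unfolding maximal_in_def by auto
      then show "\<pi> \<in> Lq P r" unfolding Lq_def using le ne by simp
    qed
  qed
  have dP: "downset P" unfolding downset_def by simp
  note claim = main_claim[OF dP r01]
  have injm: "inj_on (map \<omega>) LE"
  proof (rule inj_on_mapI)
    have "\<Union> (set ` LE) \<subseteq> P" unfolding LE_def linear_extension_def by auto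
    then show "inj_on \<omega> (\<Union> (set ` LE))" using inj inj_on_subset by blast
  qed
  have JH: "JH P leq \<omega> = map \<omega> ` LE" unfolding JH_def LE_def by auto
  have W: "W P leq \<omega> (-1) = Ssum P r"
  proof -
    have "W P leq \<omega> (-1) = (\<Sum>\<pi>\<in>map \<omega> ` LE. (-1) ^ des \<pi>)" unfolding W_def JH ..
    also have "\<dots> = (\<Sum>\<pi>\<in>LE. (-1) ^ des (map \<omega> \<pi>))" by (rule sum.reindex[OF injm, unfolded comp_def])
    also have "\<dots> = Ssum P r" unfolding Ssum_def LqP by (simp add: des_eq_desr)
    finally show ?thesis .
  qed
  have setR: "{\<pi> \<in> JH P leq \<omega>. reverse_alternating \<pi> \<and> components_odd f \<pi>} = map \<omega> ` {\<pi>\<in>LE. good \<pi>}"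
  proof -
    have "reverse_alternating (map \<omega> \<pi>) \<and> components_odd f (map \<omega> \<pi>) \<longleftrightarrow> good \<pi>" for \<pi>
      unfolding good_def RA_eq components_odd_map g_def ..
    then show ?thesis unfolding JH by auto
  qed
  have cardR: "int (card {\<pi> \<in> JH P leq \<omega>. reverse_alternating \<pi> \<and> components_odd f \<pi>}) = Gsum P r"
  proof -
    have "card (map \<omega> ` {\<pi>\<in>LE. good \<pi>}) = card {\<pi>\<in>LE. good \<pi>}"
    proof (rule card_image)
      show "inj_on (map \<omega>) {\<pi>\<in>LE. good \<pi>}" by (rule inj_on_subset[OF injm]) auto
    qed
    moreover have "Gsum P r = int (card {\<pi>\<in>LE. good \<pi>})"
      unfolding Gsum_def LqP using sum_indicator_card[OF finLE] .
    ultimately show ?thesis using setR by simp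
  qed
  have fe: "f = (\<lambda>a. rho P leq \<omega> (the_inv_into P \<omega> a))" by (rule ext) (simp add: f_def)
  define d where "d = int (card P) - 1 - r"
  have cP: "card P \<ge> 1" using finP Pne by (simp add: Suc_le_eq card_gt_0_iff)
  have CDe: "CD P leq \<omega> r = (if odd d then 0 else (-1) ^ nat \<bar>d div 2\<bar> * W P leq \<omega> (-1))"
    unfolding CD_def d_def Let_def ..
  show ?thesis
  proof (cases "odd d")
    case True
    then have "Gsum P r = 0" using claim d_def by simp
    then show ?thesis using CDe True cardR unfolding fe by simp
  next
    case False
    then have S: "Ssum P r = (-1) ^ nat (d div 2) * Gsum P r" using claim d_def by simp
    have "d \<ge> 0" using False cP r01 d_def by auto
    then have ab: "\<bar>d div 2\<bar> = d div 2" by simp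
    have one: "(-1::int) ^ nat (d div 2) * (-1) ^ nat (d div 2) = 1"
      by (simp add: power_mult_distrib[symmetric])
    have "CD P leq \<omega> r = (-1) ^ nat (d div 2) * ((-1) ^ nat (d div 2) * Gsum P r)"
      using CDe False W S ab by simp
    also have "\<dots> = Gsum P r" using one by (simp add: mult.assoc[symmetric])
    finally show ?thesis using cardR unfolding fe by simp
  qed
qed

end
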